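(* The adjunctions $\overline{\,\cdot\,}\dashv\pi\dashv\underline{\,\cdot\,}$ restrict to adjoint equivalences $\mathbf{Lsc}_n\simeq\mathbf{Ob}_n\simeq\mathbf{Usc}_n$: the lower envelope $\overline{\,\cdot\,}:\mathbf{Ob}_n\to\mathbf{Lsc}_n$ and $\pi|_{\mathbf{Lsc}_n}$ form an adjoint equivalence, and dually $\pi|_{\mathbf{Usc}_n}$ and the upper envelope $\underline{\,\cdot\,}:\mathbf{Ob}_n\to\mathbf{Usc}_n$ form an adjoint equivalence.
   Context: Fix a field $\mathbb{k}$. $\mathbf{Pers}_n$ is the category of functors $\mathbf{R}^n\to\mathbf{Vect}_{\mathbb{k}}$ ($\mathbf{R}^n$ with componentwise order), with structure maps $V_{s,t}$; $s+\varepsilon$ adds $\varepsilon$ to each coordinate. A module $V$ is lower semicontinuous if the canonical map $\operatorname{colim}_{\varepsilon>0}V_{s-\varepsilon}\to V_s$ is an isomorphism for all $s$, and upper semicontinuous if $V_s\to\lim_{\varepsilon>0}V_{s+\varepsilon}$ is an isomorphism for all $s$; $\mathbf{Lsc}_n,\mathbf{Usc}_n$ are the corresponding full subcategories of $\mathbf{Pers}_n$. The observable category $\mathbf{Ob}_n$ has the same objects as $\mathbf{Pers}_n$; a morphism $\varphi:V\to W$ is a family of linear maps $\varphi_{s,s+\varepsilon}:V_s\to W_{s+\varepsilon}$ ($\varepsilon>0$) with $\varphi_{s,s+\varepsilon}=W_{s+\varepsilon',s+\varepsilon}\circ\varphi_{s+\varepsilon'',s+\varepsilon'}\circ V_{s,s+\varepsilon''}$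 for $0\le\varepsilon''<\varepsilon'\le\varepsilon$; composition $(\psi\circ\varphi)_{s,s+\varepsilon}=\psi_{s+\varepsilon',s+\varepsilon}\circ\varphi_{s,s+\varepsilon'}$ ($0<\varepsilon'<\varepsilon$). $\pi:\mathbf{Pers}_n\to\mathbf{Ob}_n$ is the identity on objects and sends $\varphi$ to $(W_{s,s+\varepsilon}\circ\varphi_s)$. The lower envelope $\overline V_s=\operatorname{colim}_{\varepsilon>0}V_{s-\varepsilon}$ and upper envelope $\underline V_s=\lim_{\varepsilon>0}V_{s+\varepsilon}$ are functors $\mathbf{Ob}_n\to\mathbf{Pers}_n$ (on observable morphisms induced by the $\varphi_{s-\varepsilon,s-\delta}$, resp. $\varphi_{s+\delta,s+\varepsilon}$); they satisfy $\overline{\,\cdot\,}\dashv\pi\dashv\underline{\,\cdot\,}$. *)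

theory Defs
  imports "HOL-Analysis.Analysis" "HOL-Algebra.Module"
begin

text \<open>Vector spaces over the field K are HOL-Algebra modules (records) over K.
  Persistence modules indexed by R^n (type real^'n, componentwise order).\<close>

definition lin :: "('k, 'x) ring_scheme \<Rightarrow> ('k, 'c) module \<Rightarrow> ('k, 'd) module \<Rightarrow> ('c \<Rightarrow> 'd) \<Rightarrow> bool" where
  "lin K M N f \<longleftrightarrow> f \<in> carrier M \<rightarrow> carrier N \<and>
     (\<forall>x\<in>carrier M. \<forall>y\<in>carrier M. f (x \<oplus>\<^bsub>M\<^esub> y) = f x \<oplus>\<^bsub>N\<^esub> f y) \<and>
     (\<forall>a\<in>carrier K. \<forall>x\<in>carrier M. f (a \<odot>\<^bsub>M\<^esub> x) = a \<odot>\<^bsub>N\<^esub> f x)"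

record ('n, 'k, 'c) pmod =
  sp :: "real^'n::finite \<Rightarrow> ('k, 'c) module"
  mp :: "real^'n \<Rightarrow> real^'n \<Rightarrow> 'c \<Rightarrow> 'c"

definition up :: "real^'n::finite \<Rightarrow> real \<Rightarrow> real^'n" where
  "up s e = s + (\<chi> i. e)"

definition dn :: "real^'n::finite \<Rightarrow> real \<Rightarrow> real^'n" where
  "dn s e = s - (\<chi> i. e)"

definition pers :: "'k ring \<Rightarrow> ('n::finite, 'k, 'c) pmod \<Rightarrow> bool" where
  "pers K V \<longleftrightarrow> (\<forall>s. module K (sp V s)) \<and>
     (\<forall>s t. s \<le> t \<longrightarrow> lin K (sp V s) (sp V t) (mp V s t)) \<and>
     (\<forall>s x. x \<in> carrier (sp V s) \<longrightarrow> mp V s s x = x) \<and>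
     (\<forall>s t u x. s \<le> t \<longrightarrow> t \<le> u \<longrightarrow> x \<in> carrier (sp V s) \<longrightarrow>
        mp V s u x = mp V t u (mp V s t x))"

definition pers_hom :: "'k ring \<Rightarrow> ('n::finite, 'k, 'c) pmod \<Rightarrow> ('n, 'k, 'd) pmod \<Rightarrow> (real^'n \<Rightarrow> 'c \<Rightarrow> 'd) \<Rightarrow> bool" where
  "pers_hom K V W f \<longleftrightarrow> (\<forall>s. lin K (sp V s) (sp W s) (f s)) \<and>
     (\<forall>s t x. s \<le> t \<longrightarrow> x \<in> carrier (sp V s) \<longrightarrow> f t (mp V s t x) = mp W s t (f s x))"

definition pers_iso :: "'k ring \<Rightarrow> ('n::finite, 'k, 'c) pmod \<Rightarrow> ('n, 'k, 'd) pmod \<Rightarrow> (real^'n \<Rightarrow> 'c \<Rightarrow> 'd) \<Rightarrow> bool" where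
  "pers_iso K V W f \<longleftrightarrow> pers_hom K V W f \<and>
     (\<exists>g. pers_hom K W V g \<and> (\<forall>s x. x \<in> carrier (sp V s) \<longrightarrow> g s (f s x) = x) \<and>
                               (\<forall>s y. y \<in> carrier (sp W s) \<longrightarrow> f s (g s y) = y))"

text \<open>Morphisms of the observable category Ob_n: phi s e : V_s -> W_{s+e} for e > 0.\<close>
definition obs_hom :: "'k ring \<Rightarrow> ('n::finite, 'k, 'c) pmod \<Rightarrow> ('n, 'k, 'd) pmod \<Rightarrow> (real^'n \<Rightarrow> real \<Rightarrow> 'c \<Rightarrow> 'd) \<Rightarrow> bool" where
  "obs_hom K V W \<phi> \<longleftrightarrow> (\<forall>s e. 0 < e \<longrightarrow> lin K (sp V s) (sp W (up s e)) (\<phi> s e)) \<and>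
     (\<forall>s e e' e'' x. 0 < e \<longrightarrow> 0 \<le> e'' \<longrightarrow> e'' < e' \<longrightarrow> e' \<le> e \<longrightarrow> x \<in> carrier (sp V s) \<longrightarrow>
        \<phi> s e x = mp W (up s e') (up s e) (\<phi> (up s e'') (e' - e'') (mp V s (up s e'') x)))"

definition obs_eq :: "('n::finite, 'k, 'c) pmod \<Rightarrow> (real^'n \<Rightarrow> real \<Rightarrow> 'c \<Rightarrow> 'd) \<Rightarrow> (real^'n \<Rightarrow> real \<Rightarrow> 'c \<Rightarrow> 'd) \<Rightarrow> bool" where
  "obs_eq V \<phi> \<psi> \<longleftrightarrow> (\<forall>s e x. 0 < e \<longrightarrow> x \<in> carrier (sp V s) \<longrightarrow> \<phi> s e x = \<psi> s e x)"

definition obs_comp :: "(real^'n::finite \<Rightarrow> real \<Rightarrow> 'd \<Rightarrow> 'e) \<Rightarrow> (real^'n \<Rightarrow> real \<Rightarrow> 'c \<Rightarrow> 'd) \<Rightarrow> real^'n \<Rightarrow> real \<Rightarrow> 'c \<Rightarrow> 'e" where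
  "obs_comp \<psi> \<phi> = (\<lambda>s e x. \<psi> (up s (e/2)) (e/2) (\<phi> s (e/2) x))"

definition obs_id :: "('n::finite, 'k, 'c) pmod \<Rightarrow> real^'n \<Rightarrow> real \<Rightarrow> 'c \<Rightarrow> 'c" where
  "obs_id V = (\<lambda>s e x. mp V s (up s e) x)"

definition obs_iso :: "'k ring \<Rightarrow> ('n::finite, 'k, 'c) pmod \<Rightarrow> ('n, 'k, 'd) pmod \<Rightarrow> (real^'n \<Rightarrow> real \<Rightarrow> 'c \<Rightarrow> 'd) \<Rightarrow> bool" where
  "obs_iso K V W \<phi> \<longleftrightarrow> obs_hom K V W \<phi> \<and>
     (\<exists>\<psi>. obs_hom K W V \<psi> \<and> obs_eq V (obs_comp \<psi> \<phi>) (obs_id V) \<and> obs_eq W (obs_comp \<phi> \<psi>) (obs_id W))"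

section \<open>Lower envelope: colim_{e>0} V_{s-e}, as equivalence classes of pairs (e, x), x in V_{s-e}\<close>

definition lcls :: "('n::finite, 'k, 'c) pmod \<Rightarrow> real^'n \<Rightarrow> real \<Rightarrow> 'c \<Rightarrow> (real \<times> 'c) set" where
  "lcls V s e x = {(d, y). 0 < d \<and> y \<in> carrier (sp V (dn s d)) \<and>
      (\<exists>h. 0 < h \<and> h \<le> e \<and> h \<le> d \<and> mp V (dn s e) (dn s h) x = mp V (dn s d) (dn s h) y)}"

definition lcar :: "('n::finite, 'k, 'c) pmod \<Rightarrow> real^'n \<Rightarrow> (real \<times> 'c) set set" where
  "lcar V s = {lcls V s e x | e x. 0 < e \<and> x \<in> carrier (sp V (dn s e))}"

definition lzero :: "('n::finite, 'k, 'c) pmod \<Rightarrow> real^'n \<Rightarrow> (real \<times> 'c) set" where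
  "lzero V s = lcls V s 1 (\<zero>\<^bsub>sp V (dn s 1)\<^esub>)"

definition ladd :: "('n::finite, 'k, 'c) pmod \<Rightarrow> real^'n \<Rightarrow> (real \<times> 'c) set \<Rightarrow> (real \<times> 'c) set \<Rightarrow> (real \<times> 'c) set" where
  "ladd V s a b = (SOME c. \<exists>e x d y. 0 < e \<and> 0 < d \<and> x \<in> carrier (sp V (dn s e)) \<and> y \<in> carrier (sp V (dn s d)) \<and>
      a = lcls V s e x \<and> b = lcls V s d y \<and>
      c = lcls V s (min e d) (mp V (dn s e) (dn s (min e d)) x \<oplus>\<^bsub>sp V (dn s (min e d))\<^esub> mp V (dn s d) (dn s (min e d)) y))"

definition lsmult :: "('n::finite, 'k, 'c) pmod \<Rightarrow> real^'n \<Rightarrow> 'k \<Rightarrow> (real \<times> 'c) set \<Rightarrow> (real \<times> 'c) set" where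
  "lsmult V s k a = (SOME c. \<exists>e x. 0 < e \<and> x \<in> carrier (sp V (dn s e)) \<and>
      a = lcls V s e x \<and> c = lcls V s e (k \<odot>\<^bsub>sp V (dn s e)\<^esub> x))"

definition lenv :: "('n::finite, 'k, 'c) pmod \<Rightarrow> ('n, 'k, (real \<times> 'c) set) pmod" where
  "lenv V = \<lparr> sp = (\<lambda>s. \<lparr> carrier = lcar V s, mult = undefined, one = undefined,
                           zero = lzero V s, add = ladd V s, smult = lsmult V s \<rparr>),
             mp = (\<lambda>s t a. SOME b. \<exists>e x. 0 < e \<and> x \<in> carrier (sp V (dn s e)) \<and>
                      a = lcls V s e x \<and> b = lcls V t e (mp V (dn s e) (dn t e) x)) \<rparr>"

text \<open>Counit of lower envelope -| pi (the canonical map colim V_{s-e} -> V_s) and unit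
  W -> pi(lower envelope of W) in Ob: w in W_s goes to the class of (e, w) in colim W_{(s+e)-d}.\<close>
definition lcounit :: "('n::finite, 'k, 'c) pmod \<Rightarrow> real^'n \<Rightarrow> (real \<times> 'c) set \<Rightarrow> 'c" where
  "lcounit V s a = (SOME y. \<exists>e x. 0 < e \<and> x \<in> carrier (sp V (dn s e)) \<and>
      a = lcls V s e x \<and> y = mp V (dn s e) s x)"

definition lunit :: "('n::finite, 'k, 'c) pmod \<Rightarrow> real^'n \<Rightarrow> real \<Rightarrow> 'c \<Rightarrow> (real \<times> 'c) set" where
  "lunit V s e w = lcls V (up s e) e w"

definition lsc :: "'k ring \<Rightarrow> ('n::finite, 'k, 'c) pmod \<Rightarrow> bool" where
  "lsc K V \<longleftrightarrow> pers K V \<and> (\<forall>s. bij_betw (lcounit V s) (lcar V s) (carrier (sp V s)))"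

section \<open>Upper envelope: lim_{e>0} V_{s+e}, as compatible families (extensional: undefined for e \<le> 0)\<close>

definition ucar :: "('n::finite, 'k, 'c) pmod \<Rightarrow> real^'n \<Rightarrow> (real \<Rightarrow> 'c) set" where
  "ucar V s = {f. (\<forall>e. 0 < e \<longrightarrow> f e \<in> carrier (sp V (up s e))) \<and>
      (\<forall>d e. 0 < d \<longrightarrow> d \<le> e \<longrightarrow> mp V (up s d) (up s e) (f d) = f e) \<and>
      (\<forall>e. \<not> 0 < e \<longrightarrow> f e = undefined)}"

definition uenv :: "('n::finite, 'k, 'c) pmod \<Rightarrow> ('n, 'k, real \<Rightarrow> 'c) pmod" where
  "uenv V = \<lparr> sp = (\<lambda>s. \<lparr> carrier = ucar V s, mult = undefined, one = undefined,
        zero = (\<lambda>e. if 0 < e then \<zero>\<^bsub>sp V (up s e)\<^esub> else undefined),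
        add = (\<lambda>f g e. if 0 < e then f e \<oplus>\<^bsub>sp V (up s e)\<^esub> g e else undefined),
        smult = (\<lambda>k f e. if 0 < e then k \<odot>\<^bsub>sp V (up s e)\<^esub> f e else undefined) \<rparr>),
     mp = (\<lambda>s t f e. if 0 < e then mp V (up s e) (up t e) (f e) else undefined) \<rparr>"

text \<open>Unit V -> upper envelope of pi V (the canonical map V_s -> lim V_{s+e}) and
  counit pi(upper envelope of W) -> W in Ob (projection onto the e-th component).\<close>
definition uunit :: "('n::finite, 'k, 'c) pmod \<Rightarrow> real^'n \<Rightarrow> 'c \<Rightarrow> real \<Rightarrow> 'c" where
  "uunit V s x = (\<lambda>e. if 0 < e then mp V s (up s e) x else undefined)"

definition ucounit :: "real^'n::finite \<Rightarrow> real \<Rightarrow> (real \<Rightarrow> 'c) \<Rightarrow> 'c" where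
  "ucounit s e f = f e"

definition usc :: "'k ring \<Rightarrow> ('n::finite, 'k, 'c) pmod \<Rightarrow> bool" where
  "usc K V \<longleftrightarrow> pers K V \<and> (\<forall>s. bij_betw (uunit V s) (carrier (sp V s)) (ucar V s))"

end

theory Submission
  imports Defs
begin


lemma up_up[simp]: "up (up s a) b = up s (a + b)"
  by (simp add: up_def vec_eq_iff)
lemma dn_eq[simp]: "dn s e = up s (- e)"
  by (simp add: up_def dn_def vec_eq_iff)
lemma up_0[simp]: "up s 0 = s"
  by (simp add: up_def vec_eq_iff)
lemma up_le_up_iff[simp]: "up s a \<le> up s b \<longleftrightarrow> a \<le> b"
  by (simp add: up_def less_eq_vec_def)
lemma le_up_iff[simp]: "s \<le> up s b \<longleftrightarrow> 0 \<le> b"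
  using up_le_up_iff[of s 0 b] by simp
lemma up_le_iff[simp]: "up s b \<le> s \<longleftrightarrow> b \<le> 0"
  using up_le_up_iff[of s b 0] by simp
lemma up_mono[simp]: "s \<le> t \<Longrightarrow> a \<le> b \<Longrightarrow> up s a \<le> up t b"
  by (simp add: up_def less_eq_vec_def add_mono)
lemma up_mono2[simp]: "s \<le> t \<Longrightarrow> a \<le> 0 \<Longrightarrow> up s a \<le> t"
  using up_mono[of s t a 0] by simp
lemma up_mono3[simp]: "s \<le> t \<Longrightarrow> 0 \<le> b \<Longrightarrow> s \<le> up t b"
  using up_mono[of s t 0 b] by simp

lemma linD:
  assumes "lin K M N f"
  shows "x \<in> carrier M \<Longrightarrow> f x \<in> carrier N"
    and "x \<in> carrier M \<Longrightarrow> y \<in> carrier M \<Longrightarrow> f (x \<oplus>\<^bsub>M\<^esub> y) = f x \<oplus>\<^bsub>N\<^esub> f y"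
    and "a \<in> carrier K \<Longrightarrow> x \<in> carrier M \<Longrightarrow> f (a \<odot>\<^bsub>M\<^esub> x) = a \<odot>\<^bsub>N\<^esub> f x"
  using assms unfolding lin_def by blast+

lemma lin_zero:
  assumes "lin K M N f" "module K M" "module K N"
  shows "f \<zero>\<^bsub>M\<^esub> = \<zero>\<^bsub>N\<^esub>"
proof -
  interpret M: module K M by fact
  interpret N: module K N by fact
  have "f \<zero>\<^bsub>M\<^esub> = f (\<zero>\<^bsub>K\<^esub> \<odot>\<^bsub>M\<^esub> \<zero>\<^bsub>M\<^esub>)" by simp
  also have "\<dots> = \<zero>\<^bsub>K\<^esub> \<odot>\<^bsub>N\<^esub> f \<zero>\<^bsub>M\<^esub>"
    by (rule linD(3)[OF assms(1)]) simp_all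
  also have "\<dots> = \<zero>\<^bsub>N\<^esub>" using linD(1)[OF assms(1)] by simp
  finally show ?thesis .
qed

locale pm =
  fixes K :: "'k ring" and V :: "('n::finite, 'k, 'c) pmod"
  assumes fieldK: "field K" and persV: "pers K V"
begin

lemma crK: "cring K" using fieldK field.axioms(1) domain.axioms(1) by blast

lemma modV[simp]: "module K (sp V s)"
  using persV unfolding pers_def by blast

lemma linM: "s \<le> t \<Longrightarrow> lin K (sp V s) (sp V t) (mp V s t)"
  using persV unfolding pers_def by blast

lemma M_closed[simp]: "s \<le> t \<Longrightarrow> x \<in> carrier (sp V s) \<Longrightarrow> mp V s t x \<in> carrier (sp V t)"
  by (rule linD(1)[OF linM])
lemma M_add: "s \<le> t \<Longrightarrow> x \<in> carrier (sp V s) \<Longrightarrow> y \<in> carrier (sp V s) \<Longrightarrow>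
   mp V s t (x \<oplus>\<^bsub>sp V s\<^esub> y) = mp V s t x \<oplus>\<^bsub>sp V t\<^esub> mp V s t y"
  by (rule linD(2)[OF linM])
lemma M_smult: "s \<le> t \<Longrightarrow> a \<in> carrier K \<Longrightarrow> x \<in> carrier (sp V s) \<Longrightarrow>
   mp V s t (a \<odot>\<^bsub>sp V s\<^esub> x) = a \<odot>\<^bsub>sp V t\<^esub> mp V s t x"
  by (rule linD(3)[OF linM])
lemma M_zero[simp]: "s \<le> t \<Longrightarrow> mp V s t \<zero>\<^bsub>sp V s\<^esub> = \<zero>\<^bsub>sp V t\<^esub>"
  by (rule lin_zero[OF linM]) simp_all
lemma M_id[simp]: "x \<in> carrier (sp V s) \<Longrightarrow> mp V s s x = x"
  using persV unfolding pers_def by blast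
lemma M_comp[simp]: "s \<le> t \<Longrightarrow> t \<le> u \<Longrightarrow> x \<in> carrier (sp V s) \<Longrightarrow> mp V t u (mp V s t x) = mp V s u x"
  using persV unfolding pers_def by metis

lemma V_add_closed[simp]: "x \<in> carrier (sp V s) \<Longrightarrow> y \<in> carrier (sp V s) \<Longrightarrow> x \<oplus>\<^bsub>sp V s\<^esub> y \<in> carrier (sp V s)"
proof -
  interpret P: module K "sp V s" by simp
  show "x \<in> carrier (sp V s) \<Longrightarrow> y \<in> carrier (sp V s) \<Longrightarrow> x \<oplus>\<^bsub>sp V s\<^esub> y \<in> carrier (sp V s)" by simp
qed
lemma V_smult_closed[simp]: "a \<in> carrier K \<Longrightarrow> x \<in> carrier (sp V s) \<Longrightarrow> a \<odot>\<^bsub>sp V s\<^esub> x \<in> carrier (sp V s)"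
proof -
  interpret P: module K "sp V s" by simp
  show "a \<in> carrier K \<Longrightarrow> x \<in> carrier (sp V s) \<Longrightarrow> a \<odot>\<^bsub>sp V s\<^esub> x \<in> carrier (sp V s)" by simp
qed
lemma V_zero_closed[simp]: "\<zero>\<^bsub>sp V s\<^esub> \<in> carrier (sp V s)"
proof -
  interpret P: module K "sp V s" by simp
  show ?thesis by simp
qed

section \<open>lower envelope\<close>

definition eqat :: "real^'n \<Rightarrow> real \<Rightarrow> 'c \<Rightarrow> real \<Rightarrow> 'c \<Rightarrow> real \<Rightarrow> bool" where
  "eqat s e x d y h \<longleftrightarrow> mp V (up s (-e)) (up s (-h)) x = mp V (up s (-d)) (up s (-h)) y"

lemma eqat_mono:
  assumes "eqat s e x d y h" "0 < h'" "h' \<le> h" "h \<le> e" "h \<le> d"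
    "x \<in> carrier (sp V (up s (-e)))" "y \<in> carrier (sp V (up s (-d)))"
  shows "eqat s e x d y h'"
proof -
  have "mp V (up s (-e)) (up s (-h')) x = mp V (up s (-h)) (up s (-h')) (mp V (up s (-e)) (up s (-h)) x)"
    using assms by simp
  also have "\<dots> = mp V (up s (-h)) (up s (-h')) (mp V (up s (-d)) (up s (-h)) y)"
    using assms(1) unfolding eqat_def by simp
  also have "\<dots> = mp V (up s (-d)) (up s (-h')) y" using assms by simp
  finally show ?thesis unfolding eqat_def .
qed

lemma mem_lcls: "(d, y) \<in> lcls V s e x \<longleftrightarrow> 0 < d \<and> y \<in> carrier (sp V (up s (-d))) \<and>
   (\<exists>h. 0 < h \<and> h \<le> e \<and> h \<le> d \<and> eqat s e x d y h)"
  unfolding lcls_def eqat_def by simp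

lemma lcls_self: "0 < e \<Longrightarrow> x \<in> carrier (sp V (up s (-e))) \<Longrightarrow> (e, x) \<in> lcls V s e x"
  unfolding mem_lcls eqat_def by auto

lemma eqat_sym: "eqat s e x d y h \<Longrightarrow> eqat s d y e x h"
  unfolding eqat_def by simp

lemma lcls_sub:
  assumes "0 < e" "x \<in> carrier (sp V (up s (-e)))" "0 < d" "y \<in> carrier (sp V (up s (-d)))"
    and h: "0 < h" "h \<le> e" "h \<le> d" "eqat s e x d y h"
    and p: "(d', y') \<in> lcls V s e x"
  shows "(d', y') \<in> lcls V s d y"
proof -
  obtain k where k: "0 < d'" "y' \<in> carrier (sp V (up s (-d')))" "0 < k" "k \<le> e" "k \<le> d'" "eqat s e x d' y' k"
    using p unfolding mem_lcls by blast
  define m where "m = min h k"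
  have m: "0 < m" "m \<le> h" "m \<le> k" using h k by (auto simp: m_def)
  have "eqat s e x d y m" by (rule eqat_mono[OF h(4) m(1,2)]) (use assms h in auto)
  moreover have "eqat s e x d' y' m" by (rule eqat_mono[OF k(6) m(1,3)]) (use assms k in auto)
  ultimately have "eqat s d y d' y' m" unfolding eqat_def by simp
  then show "(d', y') \<in> lcls V s d y" unfolding mem_lcls using k h m by (auto intro!: exI[of _ m])
qed

lemma lcls_eq_iff:
  assumes "0 < e" "x \<in> carrier (sp V (up s (-e)))" "0 < d" "y \<in> carrier (sp V (up s (-d)))"
  shows "lcls V s e x = lcls V s d y \<longleftrightarrow> (\<exists>h. 0 < h \<and> h \<le> e \<and> h \<le> d \<and> eqat s e x d y h)"
proof
  assume "lcls V s e x = lcls V s d y"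
  then have "(d, y) \<in> lcls V s e x" using lcls_self[OF assms(3,4)] by simp
  then show "\<exists>h. 0 < h \<and> h \<le> e \<and> h \<le> d \<and> eqat s e x d y h" unfolding mem_lcls by blast
next
  assume "\<exists>h. 0 < h \<and> h \<le> e \<and> h \<le> d \<and> eqat s e x d y h"
  then obtain h where h: "0 < h" "h \<le> e" "h \<le> d" "eqat s e x d y h" by blast
  have 1: "(d', y') \<in> lcls V s d y" if "(d', y') \<in> lcls V s e x" for d' y'
    by (rule lcls_sub[OF assms h that])
  have 2: "(d', y') \<in> lcls V s e x" if "(d', y') \<in> lcls V s d y" for d' y'
    by (rule lcls_sub[OF assms(3,4,1,2) h(1,3,2) eqat_sym[OF h(4)] that])
  show "lcls V s e x = lcls V s d y"
    using 1 2 by auto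
qed

lemma lcls_push:
  assumes "0 < d" "d \<le> e" "x \<in> carrier (sp V (up s (-e)))"
  shows "lcls V s e x = lcls V s d (mp V (up s (-e)) (up s (-d)) x)"
  using assms by (subst lcls_eq_iff) (auto simp: eqat_def intro!: exI[of _ d])

lemma lcls_in_lcar: "0 < e \<Longrightarrow> x \<in> carrier (sp V (up s (-e))) \<Longrightarrow> lcls V s e x \<in> lcar V s"
  unfolding lcar_def by auto

lemma lcar_E:
  assumes "a \<in> lcar V s"
  obtains e where "0 < e" "\<And>d. 0 < d \<Longrightarrow> d \<le> e \<Longrightarrow> \<exists>x \<in> carrier (sp V (up s (-d))). a = lcls V s d x"
proof -
  obtain e x where ex: "a = lcls V s e x" "0 < e" "x \<in> carrier (sp V (up s (-e)))"
    using assms unfolding lcar_def by auto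
  show ?thesis
  proof (rule that[OF ex(2)])
    fix d assume d: "0 < d" "d \<le> e"
    show "\<exists>x' \<in> carrier (sp V (up s (-d))). a = lcls V s d x'"
      by (rule bexI[of _ "mp V (up s (-e)) (up s (-d)) x"]) (use ex d lcls_push[OF d ex(3)] in simp_all)
  qed
qed

lemma lcar_common2:
  assumes "a \<in> lcar V s" "b \<in> lcar V s"
  obtains d x y where "0 < d" "x \<in> carrier (sp V (up s (-d)))" "y \<in> carrier (sp V (up s (-d)))"
    "a = lcls V s d x" "b = lcls V s d y"
proof -
  obtain e1 where e1: "0 < e1" "\<And>d. 0 < d \<Longrightarrow> d \<le> e1 \<Longrightarrow> \<exists>x \<in> carrier (sp V (up s (-d))). a = lcls V s d x"
    using lcar_E[OF assms(1)] by blast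
  obtain e2 where e2: "0 < e2" "\<And>d. 0 < d \<Longrightarrow> d \<le> e2 \<Longrightarrow> \<exists>x \<in> carrier (sp V (up s (-d))). b = lcls V s d x"
    using lcar_E[OF assms(2)] by blast
  have m: "0 < min e1 e2" using e1 e2 by simp
  obtain x where x: "x \<in> carrier (sp V (up s (- min e1 e2)))" "a = lcls V s (min e1 e2) x"
    using e1(2)[of "min e1 e2"] m by auto
  obtain y where y: "y \<in> carrier (sp V (up s (- min e1 e2)))" "b = lcls V s (min e1 e2) y"
    using e2(2)[of "min e1 e2"] m by auto
  show ?thesis by (rule that[OF m x(1) y(1) x(2) y(2)])
qed

lemma lcar_common3:
  assumes "a \<in> lcar V s" "b \<in> lcar V s" "c \<in> lcar V s"
  obtains d x y z where "0 < d" "x \<in> carrier (sp V (up s (-d)))" "y \<in> carrier (sp V (up s (-d)))"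
    "z \<in> carrier (sp V (up s (-d)))" "a = lcls V s d x" "b = lcls V s d y" "c = lcls V s d z"
proof -
  obtain e1 where e1: "0 < e1" "\<And>d. 0 < d \<Longrightarrow> d \<le> e1 \<Longrightarrow> \<exists>x \<in> carrier (sp V (up s (-d))). a = lcls V s d x"
    using lcar_E[OF assms(1)] by blast
  obtain e2 where e2: "0 < e2" "\<And>d. 0 < d \<Longrightarrow> d \<le> e2 \<Longrightarrow> \<exists>x \<in> carrier (sp V (up s (-d))). b = lcls V s d x"
    using lcar_E[OF assms(2)] by blast
  obtain e3 where e3: "0 < e3" "\<And>d. 0 < d \<Longrightarrow> d \<le> e3 \<Longrightarrow> \<exists>x \<in> carrier (sp V (up s (-d))). c = lcls V s d x"
    using lcar_E[OF assms(3)] by blast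
  define m where "m = min e1 (min e2 e3)"
  have m: "0 < m" "m \<le> e1" "m \<le> e2" "m \<le> e3" using e1 e2 e3 by (auto simp: m_def)
  obtain x where x: "x \<in> carrier (sp V (up s (- m)))" "a = lcls V s m x"
    using e1(2)[OF m(1,2)] by blast
  obtain y where y: "y \<in> carrier (sp V (up s (- m)))" "b = lcls V s m y"
    using e2(2)[OF m(1,3)] by blast
  obtain z where z: "z \<in> carrier (sp V (up s (- m)))" "c = lcls V s m z"
    using e3(2)[OF m(1,4)] by blast
  show ?thesis by (rule that[OF m(1) x(1) y(1) z(1) x(2) y(2) z(2)])
qed

end


lemma up_inj[simp]: "up s a = up s b \<longleftrightarrow> a = b"
proof
  assume "up s a = up s b"
  then have "(up s a) $ undefined = (up s b) $ undefined" by simp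
  then show "a = b" by (simp add: up_def)
qed simp

context pm begin

lemma ladd_eq:
  assumes e: "0 < e" and x: "x \<in> carrier (sp V (up s (-e)))" and y: "y \<in> carrier (sp V (up s (-e)))"
  shows "ladd V s (lcls V s e x) (lcls V s e y) = lcls V s e (x \<oplus>\<^bsub>sp V (up s (-e))\<^esub> y)"
  unfolding ladd_def
proof (rule some_equality)
  show "\<exists>e' x' d y'. 0 < e' \<and> 0 < d \<and> x' \<in> carrier (sp V (dn s e')) \<and> y' \<in> carrier (sp V (dn s d)) \<and>
          lcls V s e x = lcls V s e' x' \<and> lcls V s e y = lcls V s d y' \<and>
          lcls V s e (x \<oplus>\<^bsub>sp V (up s (-e))\<^esub> y) = lcls V s (min e' d) (mp V (dn s e') (dn s (min e' d)) x' \<oplus>\<^bsub>sp V (dn s (min e' d))\<^esub> mp V (dn s d) (dn s (min e' d)) y')"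
    by (rule exI[of _ e], rule exI[of _ x], rule exI[of _ e], rule exI[of _ y]) (use assms in simp)
next
  fix c
  assume "\<exists>e' x' d y'. 0 < e' \<and> 0 < d \<and> x' \<in> carrier (sp V (dn s e')) \<and> y' \<in> carrier (sp V (dn s d)) \<and>
          lcls V s e x = lcls V s e' x' \<and> lcls V s e y = lcls V s d y' \<and>
          c = lcls V s (min e' d) (mp V (dn s e') (dn s (min e' d)) x' \<oplus>\<^bsub>sp V (dn s (min e' d))\<^esub> mp V (dn s d) (dn s (min e' d)) y')"
  then obtain e' x' d y' where
    h: "0 < e'" "0 < d" "x' \<in> carrier (sp V (up s (-e')))" "y' \<in> carrier (sp V (up s (-d)))"
      "lcls V s e x = lcls V s e' x'" "lcls V s e y = lcls V s d y'"
      "c = lcls V s (min e' d) (mp V (up s (-e')) (up s (- min e' d)) x' \<oplus>\<^bsub>sp V (up s (- min e' d))\<^esub> mp V (up s (-d)) (up s (- min e' d)) y')"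
    by auto
  obtain h1 where h1: "0 < h1" "h1 \<le> e" "h1 \<le> e'" "eqat s e x e' x' h1"
    using h(5) lcls_eq_iff[OF e x h(1,3)] by blast
  obtain h2 where h2: "0 < h2" "h2 \<le> e" "h2 \<le> d" "eqat s e y d y' h2"
    using h(6) lcls_eq_iff[OF e y h(2,4)] by blast
  define m where "m = min e' d"
  define k where "k = min h1 h2"
  have k: "0 < k" "k \<le> h1" "k \<le> h2" "k \<le> m" "0 < m" "m \<le> e'" "m \<le> d" using h1 h2 h by (auto simp: k_def m_def)
  have 1: "eqat s e x e' x' k" by (rule eqat_mono[OF h1(4) k(1,2)]) (use h1 h x in auto)
  have 2: "eqat s e y d y' k" by (rule eqat_mono[OF h2(4) k(1,3)]) (use h2 h y in auto)
  have "eqat s e (x \<oplus>\<^bsub>sp V (up s (-e))\<^esub> y) m (mp V (up s (-e')) (up s (- m)) x' \<oplus>\<^bsub>sp V (up s (- m))\<^esub> mp V (up s (-d)) (up s (- m)) y') k"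
    using 1 2 k h h1 h2 x y unfolding eqat_def by (simp add: M_add)
  then have "lcls V s e (x \<oplus>\<^bsub>sp V (up s (-e))\<^esub> y) = c"
    unfolding h(7) m_def[symmetric] using k h1 h x y
    by (subst lcls_eq_iff) (auto intro!: exI[of _ k])
  then show "c = lcls V s e (x \<oplus>\<^bsub>sp V (up s (-e))\<^esub> y)" by simp
qed

lemma lsmult_eq:
  assumes e: "0 < e" and x: "x \<in> carrier (sp V (up s (-e)))" and a: "a \<in> carrier K"
  shows "lsmult V s a (lcls V s e x) = lcls V s e (a \<odot>\<^bsub>sp V (up s (-e))\<^esub> x)"
  unfolding lsmult_def
proof (rule some_equality)
  show "\<exists>e' x'. 0 < e' \<and> x' \<in> carrier (sp V (dn s e')) \<and> lcls V s e x = lcls V s e' x' \<and>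
          lcls V s e (a \<odot>\<^bsub>sp V (up s (-e))\<^esub> x) = lcls V s e' (a \<odot>\<^bsub>sp V (dn s e')\<^esub> x')"
    by (rule exI[of _ e], rule exI[of _ x]) (use assms in simp)
next
  fix c
  assume "\<exists>e' x'. 0 < e' \<and> x' \<in> carrier (sp V (dn s e')) \<and> lcls V s e x = lcls V s e' x' \<and>
          c = lcls V s e' (a \<odot>\<^bsub>sp V (dn s e')\<^esub> x')"
  then obtain e' x' where h: "0 < e'" "x' \<in> carrier (sp V (up s (-e')))" "lcls V s e x = lcls V s e' x'"
     "c = lcls V s e' (a \<odot>\<^bsub>sp V (up s (-e'))\<^esub> x')" by auto
  obtain h1 where h1: "0 < h1" "h1 \<le> e" "h1 \<le> e'" "eqat s e x e' x' h1"
    using h(3) lcls_eq_iff[OF e x h(1,2)] by blast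
  have "eqat s e (a \<odot>\<^bsub>sp V (up s (-e))\<^esub> x) e' (a \<odot>\<^bsub>sp V (up s (-e'))\<^esub> x') h1"
    using h1 h x a unfolding eqat_def by (simp add: M_smult)
  then show "c = lcls V s e (a \<odot>\<^bsub>sp V (up s (-e))\<^esub> x)"
    unfolding h(4) using h1 h x a
    by (subst eq_commute, subst lcls_eq_iff) (auto intro!: exI[of _ h1])
qed

lemma lzero_eq:
  assumes e: "0 < e"
  shows "lzero V s = lcls V s e \<zero>\<^bsub>sp V (up s (-e))\<^esub>"
  unfolding lzero_def dn_eq using e
  by (subst lcls_eq_iff) (auto simp: eqat_def intro!: exI[of _ "min 1 e"])

lemma lmp_eq:
  assumes st: "s \<le> t" and e: "0 < e" and x: "x \<in> carrier (sp V (up s (-e)))"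
  shows "mp (lenv V) s t (lcls V s e x) = lcls V t e (mp V (up s (-e)) (up t (-e)) x)"
  unfolding lenv_def pmod.simps
proof (rule some_equality)
  show "\<exists>e' x'. 0 < e' \<and> x' \<in> carrier (sp V (dn s e')) \<and> lcls V s e x = lcls V s e' x' \<and>
          lcls V t e (mp V (up s (-e)) (up t (-e)) x) = lcls V t e' (mp V (dn s e') (dn t e') x')"
    by (rule exI[of _ e], rule exI[of _ x]) (use assms in simp)
next
  fix c
  assume "\<exists>e' x'. 0 < e' \<and> x' \<in> carrier (sp V (dn s e')) \<and> lcls V s e x = lcls V s e' x' \<and>
          c = lcls V t e' (mp V (dn s e') (dn t e') x')"
  then obtain e' x' where h: "0 < e'" "x' \<in> carrier (sp V (up s (-e')))" "lcls V s e x = lcls V s e' x'"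
     "c = lcls V t e' (mp V (up s (-e')) (up t (-e')) x')" by auto
  obtain h1 where h1: "0 < h1" "h1 \<le> e" "h1 \<le> e'" "eqat s e x e' x' h1"
    using h(3) lcls_eq_iff[OF e x h(1,2)] by blast
  have "mp V (up s (-e)) (up t (-h1)) x = mp V (up s (-h1)) (up t (-h1)) (mp V (up s (-e)) (up s (-h1)) x)"
    using h1 x st by simp
  also have "\<dots> = mp V (up s (-h1)) (up t (-h1)) (mp V (up s (-e')) (up s (-h1)) x')"
    using h1(4) unfolding eqat_def by simp
  also have "\<dots> = mp V (up s (-e')) (up t (-h1)) x'" using h1 h st by simp
  finally have "eqat t e (mp V (up s (-e)) (up t (-e)) x) e' (mp V (up s (-e')) (up t (-e')) x') h1"
    unfolding eqat_def using h1 h st x by simp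
  then show "c = lcls V t e (mp V (up s (-e)) (up t (-e)) x)"
    unfolding h(4) using h1 h x st
    by (subst eq_commute, subst lcls_eq_iff) (auto intro!: exI[of _ h1])
qed

lemma lcounit_eq:
  assumes e: "0 < e" and x: "x \<in> carrier (sp V (up s (-e)))"
  shows "lcounit V s (lcls V s e x) = mp V (up s (-e)) s x"
  unfolding lcounit_def
proof (rule some_equality)
  show "\<exists>e' x'. 0 < e' \<and> x' \<in> carrier (sp V (dn s e')) \<and> lcls V s e x = lcls V s e' x' \<and>
          mp V (up s (-e)) s x = mp V (dn s e') s x'"
    by (rule exI[of _ e], rule exI[of _ x]) (use assms in simp)
next
  fix c
  assume "\<exists>e' x'. 0 < e' \<and> x' \<in> carrier (sp V (dn s e')) \<and> lcls V s e x = lcls V s e' x' \<and>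
          c = mp V (dn s e') s x'"
  then obtain e' x' where h: "0 < e'" "x' \<in> carrier (sp V (up s (-e')))" "lcls V s e x = lcls V s e' x'"
     "c = mp V (up s (-e')) s x'" by auto
  obtain h1 where h1: "0 < h1" "h1 \<le> e" "h1 \<le> e'" "eqat s e x e' x' h1"
    using h(3) lcls_eq_iff[OF e x h(1,2)] by blast
  have "mp V (up s (-e)) s x = mp V (up s (-h1)) s (mp V (up s (-e)) (up s (-h1)) x)"
    using h1 x by simp
  also have "\<dots> = mp V (up s (-h1)) s (mp V (up s (-e')) (up s (-h1)) x')"
    using h1(4) unfolding eqat_def by simp
  also have "\<dots> = c" using h1 h by simp
  finally show "c = mp V (up s (-e)) s x" by simp
qed

lemma lenv_sp[simp]:
  "carrier (sp (lenv V) s) = lcar V s"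
  "zero (sp (lenv V) s) = lzero V s"
  "add (sp (lenv V) s) = ladd V s"
  "smult (sp (lenv V) s) = lsmult V s"
  by (simp_all add: lenv_def)

lemma lenv_module: "module K (sp (lenv V) s)"
proof (rule moduleI)
  show "cring K" by (rule crK)
next
  show "abelian_group (sp (lenv V) s)"
  proof (rule abelian_groupI)
    fix a b assume "a \<in> carrier (sp (lenv V) s)" "b \<in> carrier (sp (lenv V) s)"
    then have "a \<in> lcar V s" "b \<in> lcar V s" by simp_all
    then obtain d x y where r: "0 < d" "x \<in> carrier (sp V (up s (-d)))" "y \<in> carrier (sp V (up s (-d)))"
      "a = lcls V s d x" "b = lcls V s d y" by (rule lcar_common2)
    interpret P: module K "sp V (up s (-d))" by simp
    show "a \<oplus>\<^bsub>sp (lenv V) s\<^esub> b \<in> carrier (sp (lenv V) s)"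
      using r by (simp add: ladd_eq lcls_in_lcar)
    show "a \<oplus>\<^bsub>sp (lenv V) s\<^esub> b = b \<oplus>\<^bsub>sp (lenv V) s\<^esub> a"
      using r by (simp add: ladd_eq P.M.a_comm)
  next
    show "\<zero>\<^bsub>sp (lenv V) s\<^esub> \<in> carrier (sp (lenv V) s)"
      using lzero_eq[of 1 s] by (simp add: lcls_in_lcar)
  next
    fix a b c assume "a \<in> carrier (sp (lenv V) s)" "b \<in> carrier (sp (lenv V) s)" "c \<in> carrier (sp (lenv V) s)"
    then have "a \<in> lcar V s" "b \<in> lcar V s" "c \<in> lcar V s" by simp_all
    then obtain d x y z where r: "0 < d" "x \<in> carrier (sp V (up s (-d)))" "y \<in> carrier (sp V (up s (-d)))"
      "z \<in> carrier (sp V (up s (-d)))"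
      "a = lcls V s d x" "b = lcls V s d y" "c = lcls V s d z" by (rule lcar_common3)
    interpret P: module K "sp V (up s (-d))" by simp
    show "a \<oplus>\<^bsub>sp (lenv V) s\<^esub> b \<oplus>\<^bsub>sp (lenv V) s\<^esub> c = a \<oplus>\<^bsub>sp (lenv V) s\<^esub> (b \<oplus>\<^bsub>sp (lenv V) s\<^esub> c)"
      using r by (simp add: ladd_eq P.M.a_assoc)
  next
    fix a assume "a \<in> carrier (sp (lenv V) s)"
    then have "a \<in> lcar V s" "a \<in> lcar V s" by simp_all
    then obtain d x y where r: "0 < d" "x \<in> carrier (sp V (up s (-d)))" "y \<in> carrier (sp V (up s (-d)))"
      "a = lcls V s d x" "a = lcls V s d y" by (rule lcar_common2)
    interpret P: module K "sp V (up s (-d))" by simp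
    show "\<zero>\<^bsub>sp (lenv V) s\<^esub> \<oplus>\<^bsub>sp (lenv V) s\<^esub> a = a"
      using r lzero_eq[OF r(1), of s] by (simp add: ladd_eq)
    show "\<exists>b\<in>carrier (sp (lenv V) s). b \<oplus>\<^bsub>sp (lenv V) s\<^esub> a = \<zero>\<^bsub>sp (lenv V) s\<^esub>"
      by (rule bexI[of _ "lcls V s d (\<ominus>\<^bsub>sp V (up s (-d))\<^esub> x)"])
         (use r lzero_eq[OF r(1), of s] in \<open>simp_all add: ladd_eq P.M.l_neg lcls_in_lcar\<close>)
  qed
next
  fix k a assume k: "k \<in> carrier K" and "a \<in> carrier (sp (lenv V) s)"
  then have "a \<in> lcar V s" "a \<in> lcar V s" by simp_all
  then obtain d x y where r: "0 < d" "x \<in> carrier (sp V (up s (-d)))" "y \<in> carrier (sp V (up s (-d)))"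
      "a = lcls V s d x" "a = lcls V s d y" by (rule lcar_common2)
  interpret P: module K "sp V (up s (-d))" by simp
  show "k \<odot>\<^bsub>sp (lenv V) s\<^esub> a \<in> carrier (sp (lenv V) s)"
    using r k by (simp add: lsmult_eq lcls_in_lcar)
next
  fix k l a assume k: "k \<in> carrier K" "l \<in> carrier K" and "a \<in> carrier (sp (lenv V) s)"
  then have "a \<in> lcar V s" "a \<in> lcar V s" by simp_all
  then obtain d x y where r: "0 < d" "x \<in> carrier (sp V (up s (-d)))" "y \<in> carrier (sp V (up s (-d)))"
      "a = lcls V s d x" "a = lcls V s d y" by (rule lcar_common2)
  interpret P: module K "sp V (up s (-d))" by simp
  show "(k \<oplus>\<^bsub>K\<^esub> l) \<odot>\<^bsub>sp (lenv V) s\<^esub> a = k \<odot>\<^bsub>sp (lenv V) s\<^esub> a \<oplus>\<^bsub>sp (lenv V) s\<^esub> l \<odot>\<^bsub>sp (lenv V) s\<^esub> a"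
    using r k by (simp add: lsmult_eq ladd_eq P.smult_l_distr)
  show "(k \<otimes>\<^bsub>K\<^esub> l) \<odot>\<^bsub>sp (lenv V) s\<^esub> a = k \<odot>\<^bsub>sp (lenv V) s\<^esub> (l \<odot>\<^bsub>sp (lenv V) s\<^esub> a)"
    using r k by (simp add: lsmult_eq P.smult_assoc1)
next
  fix k a b assume k: "k \<in> carrier K" and "a \<in> carrier (sp (lenv V) s)" "b \<in> carrier (sp (lenv V) s)"
  then have "a \<in> lcar V s" "b \<in> lcar V s" by simp_all
  then obtain d x y where r: "0 < d" "x \<in> carrier (sp V (up s (-d)))" "y \<in> carrier (sp V (up s (-d)))"
      "a = lcls V s d x" "b = lcls V s d y" by (rule lcar_common2)
  interpret P: module K "sp V (up s (-d))" by simp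
  show "k \<odot>\<^bsub>sp (lenv V) s\<^esub> (a \<oplus>\<^bsub>sp (lenv V) s\<^esub> b) = k \<odot>\<^bsub>sp (lenv V) s\<^esub> a \<oplus>\<^bsub>sp (lenv V) s\<^esub> k \<odot>\<^bsub>sp (lenv V) s\<^esub> b"
    using r k by (simp add: lsmult_eq ladd_eq P.smult_r_distr)
next
  fix a assume "a \<in> carrier (sp (lenv V) s)"
  then have "a \<in> lcar V s" "a \<in> lcar V s" by simp_all
  then obtain d x y where r: "0 < d" "x \<in> carrier (sp V (up s (-d)))" "y \<in> carrier (sp V (up s (-d)))"
      "a = lcls V s d x" "a = lcls V s d y" by (rule lcar_common2)
  interpret P: module K "sp V (up s (-d))" by simp
  show "\<one>\<^bsub>K\<^esub> \<odot>\<^bsub>sp (lenv V) s\<^esub> a = a"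
    using r by (simp add: lsmult_eq)
qed

end


context pm begin

lemma lcar_rep:
  assumes "a \<in> lcar V s"
  obtains d x where "0 < d" "x \<in> carrier (sp V (up s (-d)))" "a = lcls V s d x"
  using lcar_common2[OF assms assms] by metis

lemma lenv_pers: "pers K (lenv V)"
  unfolding pers_def
proof (intro conjI allI impI)
  fix s show "module K (sp (lenv V) s)" by (rule lenv_module)
next
  fix s t :: "real^'n" assume st: "s \<le> t"
  show "lin K (sp (lenv V) s) (sp (lenv V) t) (mp (lenv V) s t)"
    unfolding lin_def
  proof (intro conjI ballI Pi_I)
    fix a assume "a \<in> carrier (sp (lenv V) s)"
    then have "a \<in> lcar V s" by simp
    then obtain d x where r: "0 < d" "x \<in> carrier (sp V (up s (-d)))" "a = lcls V s d x" by (rule lcar_rep)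
    show "mp (lenv V) s t a \<in> carrier (sp (lenv V) t)"
      using r st by (simp add: lmp_eq lcls_in_lcar)
  next
    fix a b assume "a \<in> carrier (sp (lenv V) s)" "b \<in> carrier (sp (lenv V) s)"
    then have "a \<in> lcar V s" "b \<in> lcar V s" by simp_all
    then obtain d x y where r: "0 < d" "x \<in> carrier (sp V (up s (-d)))" "y \<in> carrier (sp V (up s (-d)))"
      "a = lcls V s d x" "b = lcls V s d y" by (rule lcar_common2)
    show "mp (lenv V) s t (a \<oplus>\<^bsub>sp (lenv V) s\<^esub> b) = mp (lenv V) s t a \<oplus>\<^bsub>sp (lenv V) t\<^esub> mp (lenv V) s t b"
      using r st by (simp add: lmp_eq ladd_eq M_add)
  next
    fix k a assume k: "k \<in> carrier K" and "a \<in> carrier (sp (lenv V) s)"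
    then have "a \<in> lcar V s" by simp
    then obtain d x where r: "0 < d" "x \<in> carrier (sp V (up s (-d)))" "a = lcls V s d x" by (rule lcar_rep)
    show "mp (lenv V) s t (k \<odot>\<^bsub>sp (lenv V) s\<^esub> a) = k \<odot>\<^bsub>sp (lenv V) t\<^esub> mp (lenv V) s t a"
      using r st k by (simp add: lmp_eq lsmult_eq M_smult)
  qed
next
  fix s a assume "a \<in> carrier (sp (lenv V) s)"
  then have "a \<in> lcar V s" by simp
  then obtain d x where r: "0 < d" "x \<in> carrier (sp V (up s (-d)))" "a = lcls V s d x" by (rule lcar_rep)
  show "mp (lenv V) s s a = a" using r by (simp add: lmp_eq)
next
  fix s t u a assume st: "s \<le> t" and tu: "t \<le> u" and "a \<in> carrier (sp (lenv V) s)"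
  then have "a \<in> lcar V s" by simp
  then obtain d x where r: "0 < d" "x \<in> carrier (sp V (up s (-d)))" "a = lcls V s d x" by (rule lcar_rep)
  have su: "s \<le> u" using st tu by (rule order_trans)
  show "mp (lenv V) s u a = mp (lenv V) t u (mp (lenv V) s t a)"
    using r st tu su by (simp add: lmp_eq)
qed

lemma lenv_lsc: "lsc K (lenv V)"
proof -
  interpret L: pm K "lenv V" by (rule pm.intro[OF fieldK lenv_pers])
  show ?thesis unfolding lsc_def
  proof (intro conjI allI)
    show "pers K (lenv V)" by (rule lenv_pers)
  next
    fix s
    show "bij_betw (lcounit (lenv V) s) (lcar (lenv V) s) (carrier (sp (lenv V) s))"
      unfolding bij_betw_def
    proof
      show "inj_on (lcounit (lenv V) s) (lcar (lenv V) s)"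
      proof (rule inj_onI)
        fix A B assume A: "A \<in> lcar (lenv V) s" and B: "B \<in> lcar (lenv V) s"
          and eq: "lcounit (lenv V) s A = lcounit (lenv V) s B"
        obtain e a b where r: "0 < e" "a \<in> carrier (sp (lenv V) (up s (-e)))" "b \<in> carrier (sp (lenv V) (up s (-e)))"
          "A = lcls (lenv V) s e a" "B = lcls (lenv V) s e b" using L.lcar_common2[OF A B] by metis
        have "a \<in> lcar V (up s (-e))" "b \<in> lcar V (up s (-e))" using r by simp_all
        then obtain d x y where q: "0 < d" "x \<in> carrier (sp V (up s (-e - d)))" "y \<in> carrier (sp V (up s (-e - d)))"
          "a = lcls V (up s (-e)) d x" "b = lcls V (up s (-e)) d y"
          by (rule lcar_common2) simp
        have "lcls V s d (mp V (up s (-e - d)) (up s (-d)) x) = lcls V s d (mp V (up s (-e - d)) (up s (-d)) y)"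
          using eq r q by (simp add: L.lcounit_eq lmp_eq)
        then obtain k where k: "0 < k" "k \<le> d"
          "eqat s d (mp V (up s (-e - d)) (up s (-d)) x) d (mp V (up s (-e - d)) (up s (-d)) y) k"
          using q r by (subst (asm) lcls_eq_iff) auto
        have kx: "mp V (up s (-e - d)) (up s (-k)) x = mp V (up s (-e - d)) (up s (-k)) y"
          using k q r unfolding eqat_def by simp
        define h where "h = min k e / 2"
        have h: "0 < h" "h \<le> e" "h + h \<le> k" "h \<le> d" using k r by (auto simp: h_def)
        have 1: "mp V (up s (-e - d)) (up s (-h - h)) x = mp V (up s (-e - d)) (up s (-h - h)) y"
        proof -
          have "mp V (up s (-e - d)) (up s (-h - h)) x = mp V (up s (-k)) (up s (-h - h)) (mp V (up s (-e - d)) (up s (-k)) x)"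
            using q h k by simp
          also have "\<dots> = mp V (up s (-k)) (up s (-h - h)) (mp V (up s (-e - d)) (up s (-k)) y)"
            using kx by simp
          also have "\<dots> = mp V (up s (-e - d)) (up s (-h - h)) y"
            using q h k by simp
          finally show ?thesis .
        qed
        have 2: "mp (lenv V) (up s (-e)) (up s (-h)) a = mp (lenv V) (up s (-e)) (up s (-h)) b"
          using q h r 1
          by (simp add: lmp_eq, subst lcls_eq_iff) (auto simp: eqat_def intro!: exI[of _ h])
        show "A = B"
          unfolding r(4,5) using r h 2
          by (subst L.lcls_eq_iff) (auto simp: L.eqat_def intro!: exI[of _ h])
      qed
    next
      show "lcounit (lenv V) s ` lcar (lenv V) s = carrier (sp (lenv V) s)"
      proof (intro equalityI subsetI)
        fix y assume "y \<in> lcounit (lenv V) s ` lcar (lenv V) s"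
        then obtain A where A: "A \<in> lcar (lenv V) s" "y = lcounit (lenv V) s A" by blast
        obtain e a where r: "0 < e" "a \<in> carrier (sp (lenv V) (up s (-e)))" "A = lcls (lenv V) s e a"
          by (rule L.lcar_rep[OF A(1)])
        show "y \<in> carrier (sp (lenv V) s)"
          using A r by (simp add: L.lcounit_eq del: lenv_sp)
      next
        fix y assume "y \<in> carrier (sp (lenv V) s)"
        then have "y \<in> lcar V s" by simp
        then obtain d x where r: "0 < d" "x \<in> carrier (sp V (up s (-d)))" "y = lcls V s d x" by (rule lcar_rep)
        define h where "h = d / 2"
        have h: "0 < h" "h + h = d" using r by (auto simp: h_def)
        define x' where "x' = mp V (up s (-d)) (up s (-h - h)) x"
        have x': "x' \<in> carrier (sp V (up s (-h - h)))" using r h by (simp add: x'_def)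
        define a where "a = lcls V (up s (-h)) h x'"
        have a: "a \<in> carrier (sp (lenv V) (up s (-h)))" using x' h by (simp add: a_def lcls_in_lcar)
        have "lcounit (lenv V) s (lcls (lenv V) s h a) = lcls V s h (mp V (up s (-h - h)) (up s (-h)) x')"
          using a h x' by (simp add: L.lcounit_eq a_def lmp_eq del: lenv_sp)
        also have "\<dots> = lcls V s h (mp V (up s (-d)) (up s (-h)) x)"
          using r h by (simp add: x'_def)
        also have "\<dots> = y" using r h lcls_push[of h d x s] by simp
        finally show "y \<in> lcounit (lenv V) s ` lcar (lenv V) s"
          using a h by (auto intro!: image_eqI L.lcls_in_lcar)
      qed
    qed
  qed
qed

end


context pm begin

lemma lunit_lin: "0 < e \<Longrightarrow> lin K (sp V s) (sp (lenv V) (up s e)) (lunit V s e)"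
  unfolding lin_def lunit_def
proof (intro conjI ballI Pi_I)
  fix x assume "0 < e" "x \<in> carrier (sp V s)"
  then show "lcls V (up s e) e x \<in> carrier (sp (lenv V) (up s e))" by (simp add: lcls_in_lcar)
next
  fix x y assume "0 < e" "x \<in> carrier (sp V s)" "y \<in> carrier (sp V s)"
  then show "lcls V (up s e) e (x \<oplus>\<^bsub>sp V s\<^esub> y) = lcls V (up s e) e x \<oplus>\<^bsub>sp (lenv V) (up s e)\<^esub> lcls V (up s e) e y"
    using ladd_eq[of e x "up s e" y] by simp
next
  fix k x assume "0 < e" "k \<in> carrier K" "x \<in> carrier (sp V s)"
  then show "lcls V (up s e) e (k \<odot>\<^bsub>sp V s\<^esub> x) = k \<odot>\<^bsub>sp (lenv V) (up s e)\<^esub> lcls V (up s e) e x"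
    using lsmult_eq[of e x "up s e" k] by simp
qed

lemma lunit_obs: "obs_hom K V (lenv V) (lunit V)"
  unfolding obs_hom_def
proof (intro conjI allI impI)
  fix s e :: real
  show "0 < e \<Longrightarrow> lin K (sp V s) (sp (lenv V) (up s e)) (lunit V s e)" for s by (rule lunit_lin)
next
  fix s and e e' e'' :: real and x
  assume h: "0 < e" "0 \<le> e''" "e'' < e'" "e' \<le> e" "x \<in> carrier (sp V s)"
  define y where "y = mp V s (up s e'') x"
  have y: "y \<in> carrier (sp V (up s e''))" using h by (simp add: y_def)
  have 1: "lunit V (up s e'') (e' - e'') y = lcls V (up s e') (e' - e'') y"
    unfolding lunit_def by simp
  have 2: "mp (lenv V) (up s e') (up s e) (lcls V (up s e') (e' - e'') y)
      = lcls V (up s e) (e' - e'') (mp V (up s e'') (up s (e - (e' - e''))) y)"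
    using lmp_eq[of "up s e'" "up s e" "e' - e''" y] h y by (simp add: algebra_simps)
  have 3: "lcls V (up s e) e x = lcls V (up s e) (e' - e'') (mp V (up s e'') (up s (e - (e' - e''))) y)"
    using h y by (subst lcls_eq_iff) (auto simp: eqat_def y_def algebra_simps intro!: exI[of _ "e' - e''"])
  show "lunit V s e x = mp (lenv V) (up s e') (up s e) (lunit V (up s e'') (e' - e'') (mp V s (up s e'') x))"
    unfolding y_def[symmetric] 1 2 unfolding lunit_def 3 ..
qed

definition lpsi :: "real^'n \<Rightarrow> real \<Rightarrow> (real \<times> 'c) set \<Rightarrow> 'c" where
  "lpsi s e a = mp V s (up s e) (lcounit V s a)"

lemma lcounit_closed: "a \<in> lcar V s \<Longrightarrow> lcounit V s a \<in> carrier (sp V s)"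
  by (erule lcar_rep) (simp add: lcounit_eq)

lemma lcounit_lin: "lin K (sp (lenv V) s) (sp V s) (lcounit V s)"
  unfolding lin_def
proof (intro conjI ballI Pi_I)
  fix a assume "a \<in> carrier (sp (lenv V) s)"
  then show "lcounit V s a \<in> carrier (sp V s)" by (simp add: lcounit_closed)
next
  fix a b assume "a \<in> carrier (sp (lenv V) s)" "b \<in> carrier (sp (lenv V) s)"
  then have "a \<in> lcar V s" "b \<in> lcar V s" by simp_all
  then obtain d x y where r: "0 < d" "x \<in> carrier (sp V (up s (-d)))" "y \<in> carrier (sp V (up s (-d)))"
    "a = lcls V s d x" "b = lcls V s d y" by (rule lcar_common2)
  show "lcounit V s (a \<oplus>\<^bsub>sp (lenv V) s\<^esub> b) = lcounit V s a \<oplus>\<^bsub>sp V s\<^esub> lcounit V s b"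
    using r by (simp add: ladd_eq lcounit_eq M_add)
next
  fix k a assume k: "k \<in> carrier K" and "a \<in> carrier (sp (lenv V) s)"
  then have "a \<in> lcar V s" by simp
  then obtain d x where r: "0 < d" "x \<in> carrier (sp V (up s (-d)))" "a = lcls V s d x" by (rule lcar_rep)
  show "lcounit V s (k \<odot>\<^bsub>sp (lenv V) s\<^esub> a) = k \<odot>\<^bsub>sp V s\<^esub> lcounit V s a"
    using r k by (simp add: lsmult_eq lcounit_eq M_smult)
qed

lemma lin_comp: "lin K A B f \<Longrightarrow> lin K B C g \<Longrightarrow> lin K A C (\<lambda>x. g (f x))"
  unfolding lin_def Pi_def by simp

lemma lpsi_obs: "obs_hom K (lenv V) V lpsi"
  unfolding obs_hom_def
proof (intro conjI allI impI)
  fix s e :: real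
  show "0 < e \<Longrightarrow> lin K (sp (lenv V) s) (sp V (up s e)) (lpsi s e)" for s
    unfolding lpsi_def by (rule lin_comp[OF lcounit_lin linM]) simp
next
  fix s and e e' e'' :: real and a
  assume h: "0 < e" "0 \<le> e''" "e'' < e'" "e' \<le> e" "a \<in> carrier (sp (lenv V) s)"
  then have "a \<in> lcar V s" by simp
  then obtain d x where r: "0 < d" "x \<in> carrier (sp V (up s (-d)))" "a = lcls V s d x" by (rule lcar_rep)
  show "lpsi s e a = mp V (up s e') (up s e) (lpsi (up s e'') (e' - e'') (mp (lenv V) s (up s e'') a))"
    using h r by (simp add: lpsi_def lmp_eq lcounit_eq)
qed

lemma lunit_iso: "obs_iso K V (lenv V) (lunit V)"
  unfolding obs_iso_def
proof (intro conjI exI[of _ lpsi])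
  show "obs_hom K V (lenv V) (lunit V)" by (rule lunit_obs)
  show "obs_hom K (lenv V) V lpsi" by (rule lpsi_obs)
  show "obs_eq V (obs_comp lpsi (lunit V)) (obs_id V)"
    unfolding obs_eq_def obs_comp_def obs_id_def
  proof (intro allI impI)
    fix s e x assume h: "0 < (e::real)" "x \<in> carrier (sp V s)"
    show "lpsi (up s (e / 2)) (e / 2) (lunit V s (e / 2) x) = mp V s (up s e) x"
      using h by (simp add: lpsi_def lunit_def lcounit_eq)
  qed
  show "obs_eq (lenv V) (obs_comp (lunit V) lpsi) (obs_id (lenv V))"
    unfolding obs_eq_def obs_comp_def obs_id_def
  proof (intro allI impI)
    fix s e a assume h: "0 < (e::real)" "a \<in> carrier (sp (lenv V) s)"
    then have "a \<in> lcar V s" by simp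
    then obtain d x where r: "0 < d" "x \<in> carrier (sp V (up s (-d)))" "a = lcls V s d x" by (rule lcar_rep)
    define h0 where "h0 = min d (e/2)"
    have h0: "0 < h0" "h0 \<le> d" "h0 \<le> e/2" using r h by (auto simp: h0_def)
    show "lunit V (up s (e / 2)) (e / 2) (lpsi s (e / 2) a) = mp (lenv V) s (up s e) a"
      using h r h0 by (simp add: lpsi_def lunit_def lcounit_eq lmp_eq, subst lcls_eq_iff)
         (auto simp: eqat_def intro!: exI[of _ h0])
  qed
qed

end


lemma pers_iso_of_bij:
  assumes hom: "pers_hom K V W f" and pV: "pers K V"
    and bij: "\<And>s. bij_betw (f s) (carrier (sp V s)) (carrier (sp W s))"
  shows "pers_iso K V W f"
proof -
  define g where "g s = inv_into (carrier (sp V s)) (f s)" for s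
  have inj: "inj_on (f s) (carrier (sp V s))" and img: "f s ` carrier (sp V s) = carrier (sp W s)" for s
    using bij[of s] unfolding bij_betw_def by auto
  have gc: "g s y \<in> carrier (sp V s)" if "y \<in> carrier (sp W s)" for s y
    unfolding g_def using that img[of s] by (metis inv_into_into)
  have fg: "f s (g s y) = y" if "y \<in> carrier (sp W s)" for s y
    unfolding g_def using that img[of s] by (metis f_inv_into_f)
  have gf: "g s (f s x) = x" if "x \<in> carrier (sp V s)" for s x
    unfolding g_def using that inj[of s] by (metis inv_into_f_f)
  have linf: "lin K (sp V s) (sp W s) (f s)" for s using hom unfolding pers_hom_def by blast
  have natf: "f t (mp V s t x) = mp W s t (f s x)" if "s \<le> t" "x \<in> carrier (sp V s)" for s t x
    using hom that unfolding pers_hom_def by blast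
  have modV: "module K (sp V s)" for s using pV unfolding pers_def by blast
  have linV: "lin K (sp V s) (sp V t) (mp V s t)" if "s \<le> t" for s t using pV that unfolding pers_def by blast
  have "pers_hom K W V g"
    unfolding pers_hom_def
  proof (intro conjI allI impI)
    fix s
    interpret P: module K "sp V s" by (rule modV)
    show "lin K (sp W s) (sp V s) (g s)"
      unfolding lin_def
    proof (intro conjI ballI Pi_I)
      fix y assume "y \<in> carrier (sp W s)" then show "g s y \<in> carrier (sp V s)" by (rule gc)
    next
      fix y z assume y: "y \<in> carrier (sp W s)" and z: "z \<in> carrier (sp W s)"
      have "f s (g s y \<oplus>\<^bsub>sp V s\<^esub> g s z) = y \<oplus>\<^bsub>sp W s\<^esub> z"
        using linD(2)[OF linf gc[OF y] gc[OF z]] fg y z by simp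
      then show "g s (y \<oplus>\<^bsub>sp W s\<^esub> z) = g s y \<oplus>\<^bsub>sp V s\<^esub> g s z"
        using gf[of "g s y \<oplus>\<^bsub>sp V s\<^esub> g s z" s] gc[OF y] gc[OF z] by simp
    next
      fix k y assume k: "k \<in> carrier K" and y: "y \<in> carrier (sp W s)"
      have "f s (k \<odot>\<^bsub>sp V s\<^esub> g s y) = k \<odot>\<^bsub>sp W s\<^esub> y"
        using linD(3)[OF linf k gc[OF y]] fg y by simp
      then show "g s (k \<odot>\<^bsub>sp W s\<^esub> y) = k \<odot>\<^bsub>sp V s\<^esub> g s y"
        using gf[of "k \<odot>\<^bsub>sp V s\<^esub> g s y" s] gc[OF y] k by simp
    qed
  next
    fix s t y assume st: "s \<le> t" and y: "y \<in> carrier (sp W s)"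
    have x: "g s y \<in> carrier (sp V s)" by (rule gc[OF y])
    have "mp W s t y = f t (mp V s t (g s y))" using natf[OF st x] fg[OF y] by simp
    then show "g t (mp W s t y) = mp V s t (g s y)"
      using gf linD(1)[OF linV[OF st] x] by simp
  qed
  then show ?thesis unfolding pers_iso_def using hom gf fg by blast
qed

context pm begin

lemma lcounit_hom: "pers_hom K (lenv V) V (lcounit V)"
  unfolding pers_hom_def
proof (intro conjI allI impI)
  show "lin K (sp (lenv V) s) (sp V s) (lcounit V s)" for s by (rule lcounit_lin)
next
  fix s t a assume st: "s \<le> t" and "a \<in> carrier (sp (lenv V) s)"
  then have "a \<in> lcar V s" by simp
  then obtain d x where r: "0 < d" "x \<in> carrier (sp V (up s (-d)))" "a = lcls V s d x" by (rule lcar_rep)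
  show "lcounit V t (mp (lenv V) s t a) = mp V s t (lcounit V s a)"
    using r st by (simp add: lmp_eq lcounit_eq)
qed

end

lemma part2: "field K \<Longrightarrow> lsc K V \<Longrightarrow> pers_iso K (lenv V) V (lcounit V)"
proof -
  assume f: "field K" and l: "lsc K V"
  then interpret pm K V by (intro pm.intro) (auto simp: lsc_def)
  show ?thesis
    by (rule pers_iso_of_bij[OF lcounit_hom lenv_pers]) (use l in \<open>simp add: lsc_def\<close>)
qed

lemma part1: "field K \<Longrightarrow> pers K V \<Longrightarrow> lsc K (lenv V) \<and> obs_iso K V (lenv V) (lunit V)"
proof -
  assume f: "field K" and l: "pers K V"
  then interpret pm K V by (intro pm.intro)
  show ?thesis using lenv_lsc lunit_iso by blast
qed



context pm begin

lemma uenv_sp[simp]: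
  "carrier (sp (uenv V) s) = ucar V s"
  "zero (sp (uenv V) s) = (\<lambda>e. if 0 < e then \<zero>\<^bsub>sp V (up s e)\<^esub> else undefined)"
  "add (sp (uenv V) s) = (\<lambda>f g e. if 0 < e then f e \<oplus>\<^bsub>sp V (up s e)\<^esub> g e else undefined)"
  "smult (sp (uenv V) s) = (\<lambda>k f e. if 0 < e then k \<odot>\<^bsub>sp V (up s e)\<^esub> f e else undefined)"
  "mp (uenv V) s t = (\<lambda>f e. if 0 < e then mp V (up s e) (up t e) (f e) else undefined)"
  by (simp_all add: uenv_def)

lemma ucarD:
  assumes "f \<in> ucar V s"
  shows "0 < e \<Longrightarrow> f e \<in> carrier (sp V (up s e))"
    and "0 < d \<Longrightarrow> d \<le> e \<Longrightarrow> mp V (up s d) (up s e) (f d) = f e"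
    and "\<not> 0 < e \<Longrightarrow> f e = undefined"
  using assms unfolding ucar_def by blast+

lemma ucarI:
  assumes "\<And>e. 0 < e \<Longrightarrow> f e \<in> carrier (sp V (up s e))"
    and "\<And>d e. 0 < d \<Longrightarrow> d \<le> e \<Longrightarrow> mp V (up s d) (up s e) (f d) = f e"
    and "\<And>e. \<not> 0 < e \<Longrightarrow> f e = undefined"
  shows "f \<in> ucar V s"
  using assms unfolding ucar_def by blast

lemma ucar_ext:
  assumes "f \<in> ucar V s" "g \<in> ucar V s" "\<And>e. 0 < e \<Longrightarrow> f e = g e"
  shows "f = g"
proof
  fix e show "f e = g e" using assms ucarD(3)[OF assms(1)] ucarD(3)[OF assms(2)] by (cases "0 < e") auto
qed

lemma M_neg:
  assumes "s \<le> t" "x \<in> carrier (sp V s)"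
  shows "mp V s t (\<ominus>\<^bsub>sp V s\<^esub> x) = \<ominus>\<^bsub>sp V t\<^esub> mp V s t x"
proof -
  interpret P: module K "sp V s" by simp
  interpret Q: module K "sp V t" by simp
  have "\<ominus>\<^bsub>sp V s\<^esub> x = (\<ominus>\<^bsub>K\<^esub> \<one>\<^bsub>K\<^esub>) \<odot>\<^bsub>sp V s\<^esub> x"
    using assms P.smult_l_minus[of "\<one>\<^bsub>K\<^esub>" x] by simp
  moreover have "\<ominus>\<^bsub>sp V t\<^esub> mp V s t x = (\<ominus>\<^bsub>K\<^esub> \<one>\<^bsub>K\<^esub>) \<odot>\<^bsub>sp V t\<^esub> mp V s t x"
    using assms Q.smult_l_minus[of "\<one>\<^bsub>K\<^esub>" "mp V s t x"] by simp
  ultimately show ?thesis using assms by (simp add: M_smult)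
qed

lemma uenv_module: "module K (sp (uenv V) s)"
proof (rule moduleI)
  show "cring K" by (rule crK)
next
  show "abelian_group (sp (uenv V) s)"
  proof (rule abelian_groupI)
    fix f g assume f: "f \<in> carrier (sp (uenv V) s)" and g: "g \<in> carrier (sp (uenv V) s)"
    then have f: "f \<in> ucar V s" and g: "g \<in> ucar V s" by simp_all
    show "f \<oplus>\<^bsub>sp (uenv V) s\<^esub> g \<in> carrier (sp (uenv V) s)"
      using ucarD[OF f] ucarD[OF g] by (auto intro!: ucarI simp: M_add)
    show "f \<oplus>\<^bsub>sp (uenv V) s\<^esub> g = g \<oplus>\<^bsub>sp (uenv V) s\<^esub> f"
    proof -
      have "f e \<oplus>\<^bsub>sp V (up s e)\<^esub> g e = g e \<oplus>\<^bsub>sp V (up s e)\<^esub> f e" if "0 < e" for e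
      proof -
        interpret P: module K "sp V (up s e)" by simp
        show ?thesis using ucarD(1)[OF f that] ucarD(1)[OF g that] by (simp add: P.M.a_comm)
      qed
      then show ?thesis by (auto intro!: ext)
    qed
  next
    show "\<zero>\<^bsub>sp (uenv V) s\<^esub> \<in> carrier (sp (uenv V) s)"
      by (auto intro!: ucarI)
  next
    fix f g h assume "f \<in> carrier (sp (uenv V) s)" "g \<in> carrier (sp (uenv V) s)" "h \<in> carrier (sp (uenv V) s)"
    then have f: "f \<in> ucar V s" and g: "g \<in> ucar V s" and h: "h \<in> ucar V s" by simp_all
    have "f e \<oplus>\<^bsub>sp V (up s e)\<^esub> g e \<oplus>\<^bsub>sp V (up s e)\<^esub> h e = f e \<oplus>\<^bsub>sp V (up s e)\<^esub> (g e \<oplus>\<^bsub>sp V (up s e)\<^esub> h e)" if "0 < e" for e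
    proof -
      interpret P: module K "sp V (up s e)" by simp
      show ?thesis using ucarD(1)[OF f that] ucarD(1)[OF g that] ucarD(1)[OF h that] by (simp add: P.M.a_assoc)
    qed
    then show "f \<oplus>\<^bsub>sp (uenv V) s\<^esub> g \<oplus>\<^bsub>sp (uenv V) s\<^esub> h = f \<oplus>\<^bsub>sp (uenv V) s\<^esub> (g \<oplus>\<^bsub>sp (uenv V) s\<^esub> h)"
      by (auto intro!: ext)
  next
    fix f assume "f \<in> carrier (sp (uenv V) s)"
    then have f: "f \<in> ucar V s" by simp
    have "\<zero>\<^bsub>sp V (up s e)\<^esub> \<oplus>\<^bsub>sp V (up s e)\<^esub> f e = f e" if "0 < e" for e
    proof -
      interpret P: module K "sp V (up s e)" by simp
      show ?thesis using ucarD(1)[OF f that] by simp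
    qed
    then show "\<zero>\<^bsub>sp (uenv V) s\<^esub> \<oplus>\<^bsub>sp (uenv V) s\<^esub> f = f"
      using ucarD(3)[OF f] by (auto intro!: ext)
    have "(\<ominus>\<^bsub>sp V (up s e)\<^esub> f e) \<oplus>\<^bsub>sp V (up s e)\<^esub> f e = \<zero>\<^bsub>sp V (up s e)\<^esub>" if "0 < e" for e
    proof -
      interpret P: module K "sp V (up s e)" by simp
      show ?thesis using ucarD(1)[OF f that] by (simp add: P.M.l_neg)
    qed
    moreover have "(\<lambda>e. if 0 < e then \<ominus>\<^bsub>sp V (up s e)\<^esub> f e else undefined) \<in> ucar V s"
    proof (rule ucarI)
      fix e :: real assume "0 < e"
      then show "(if 0 < e then \<ominus>\<^bsub>sp V (up s e)\<^esub> f e else undefined) \<in> carrier (sp V (up s e))"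
      proof -
        interpret P: module K "sp V (up s e)" by simp
        show ?thesis using ucarD(1)[OF f \<open>0 < e\<close>] \<open>0 < e\<close> by simp
      qed
    next
      fix d e :: real assume "0 < d" "d \<le> e"
      then show "mp V (up s d) (up s e) (if 0 < d then \<ominus>\<^bsub>sp V (up s d)\<^esub> f d else undefined) = (if 0 < e then \<ominus>\<^bsub>sp V (up s e)\<^esub> f e else undefined)"
        using ucarD[OF f] by (simp add: M_neg)
    qed simp
    ultimately show "\<exists>y\<in>carrier (sp (uenv V) s). y \<oplus>\<^bsub>sp (uenv V) s\<^esub> f = \<zero>\<^bsub>sp (uenv V) s\<^esub>"
      by (auto intro!: bexI[of _ "\<lambda>e. if 0 < e then \<ominus>\<^bsub>sp V (up s e)\<^esub> f e else undefined"] ext)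
  qed
next
  fix k f assume k: "k \<in> carrier K" and "f \<in> carrier (sp (uenv V) s)"
  then have f: "f \<in> ucar V s" by simp
  show "k \<odot>\<^bsub>sp (uenv V) s\<^esub> f \<in> carrier (sp (uenv V) s)"
    using ucarD[OF f] k by (auto intro!: ucarI simp: M_smult)
next
  fix k l f assume k: "k \<in> carrier K" "l \<in> carrier K" and "f \<in> carrier (sp (uenv V) s)"
  then have f: "f \<in> ucar V s" by simp
  have "(k \<oplus>\<^bsub>K\<^esub> l) \<odot>\<^bsub>sp V (up s e)\<^esub> f e = k \<odot>\<^bsub>sp V (up s e)\<^esub> f e \<oplus>\<^bsub>sp V (up s e)\<^esub> l \<odot>\<^bsub>sp V (up s e)\<^esub> f e"
    "(k \<otimes>\<^bsub>K\<^esub> l) \<odot>\<^bsub>sp V (up s e)\<^esub> f e = k \<odot>\<^bsub>sp V (up s e)\<^esub> (l \<odot>\<^bsub>sp V (up s e)\<^esub> f e)" if "0 < e" for e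
  proof -
    interpret P: module K "sp V (up s e)" by simp
    show "(k \<oplus>\<^bsub>K\<^esub> l) \<odot>\<^bsub>sp V (up s e)\<^esub> f e = k \<odot>\<^bsub>sp V (up s e)\<^esub> f e \<oplus>\<^bsub>sp V (up s e)\<^esub> l \<odot>\<^bsub>sp V (up s e)\<^esub> f e"
      using ucarD(1)[OF f that] k by (simp add: P.smult_l_distr)
    show "(k \<otimes>\<^bsub>K\<^esub> l) \<odot>\<^bsub>sp V (up s e)\<^esub> f e = k \<odot>\<^bsub>sp V (up s e)\<^esub> (l \<odot>\<^bsub>sp V (up s e)\<^esub> f e)"
      using ucarD(1)[OF f that] k by (simp add: P.smult_assoc1)
  qed
  then show "(k \<oplus>\<^bsub>K\<^esub> l) \<odot>\<^bsub>sp (uenv V) s\<^esub> f = k \<odot>\<^bsub>sp (uenv V) s\<^esub> f \<oplus>\<^bsub>sp (uenv V) s\<^esub> l \<odot>\<^bsub>sp (uenv V) s\<^esub> f"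
    "(k \<otimes>\<^bsub>K\<^esub> l) \<odot>\<^bsub>sp (uenv V) s\<^esub> f = k \<odot>\<^bsub>sp (uenv V) s\<^esub> (l \<odot>\<^bsub>sp (uenv V) s\<^esub> f)"
    by (auto intro!: ext)
next
  fix k f g assume k: "k \<in> carrier K" and "f \<in> carrier (sp (uenv V) s)" "g \<in> carrier (sp (uenv V) s)"
  then have f: "f \<in> ucar V s" and g: "g \<in> ucar V s" by simp_all
  have "k \<odot>\<^bsub>sp V (up s e)\<^esub> (f e \<oplus>\<^bsub>sp V (up s e)\<^esub> g e) = k \<odot>\<^bsub>sp V (up s e)\<^esub> f e \<oplus>\<^bsub>sp V (up s e)\<^esub> k \<odot>\<^bsub>sp V (up s e)\<^esub> g e" if "0 < e" for e
  proof -
    interpret P: module K "sp V (up s e)" by simp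
    show ?thesis using ucarD(1)[OF f that] ucarD(1)[OF g that] k by (simp add: P.smult_r_distr)
  qed
  then show "k \<odot>\<^bsub>sp (uenv V) s\<^esub> (f \<oplus>\<^bsub>sp (uenv V) s\<^esub> g) = k \<odot>\<^bsub>sp (uenv V) s\<^esub> f \<oplus>\<^bsub>sp (uenv V) s\<^esub> k \<odot>\<^bsub>sp (uenv V) s\<^esub> g"
    by (auto intro!: ext)
next
  fix f assume "f \<in> carrier (sp (uenv V) s)"
  then have f: "f \<in> ucar V s" by simp
  have "\<one>\<^bsub>K\<^esub> \<odot>\<^bsub>sp V (up s e)\<^esub> f e = f e" if "0 < e" for e
  proof -
    interpret P: module K "sp V (up s e)" by simp
    show ?thesis using ucarD(1)[OF f that] by simp
  qed
  then show "\<one>\<^bsub>K\<^esub> \<odot>\<^bsub>sp (uenv V) s\<^esub> f = f"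
    using ucarD(3)[OF f] by (auto intro!: ext)
qed

end


context pm begin

lemma ump_closed:
  assumes st: "s \<le> t" and f: "f \<in> ucar V s"
  shows "(\<lambda>e. if 0 < e then mp V (up s e) (up t e) (f e) else undefined) \<in> ucar V t"
proof (rule ucarI)
  fix e :: real assume "0 < e" then show "(if 0 < e then mp V (up s e) (up t e) (f e) else undefined) \<in> carrier (sp V (up t e))"
    using ucarD(1)[OF f] st by simp
next
  fix d e :: real assume de: "0 < d" "d \<le> e"
  have "mp V (up t d) (up t e) (mp V (up s d) (up t d) (f d)) = mp V (up s d) (up t e) (f d)"
    using de st ucarD(1)[OF f] by simp
  also have "\<dots> = mp V (up s e) (up t e) (mp V (up s d) (up s e) (f d))"
    using de st ucarD(1)[OF f] by simp
  also have "\<dots> = mp V (up s e) (up t e) (f e)" using ucarD(2)[OF f de] by simp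
  finally show "mp V (up t d) (up t e) (if 0 < d then mp V (up s d) (up t d) (f d) else undefined) =
         (if 0 < e then mp V (up s e) (up t e) (f e) else undefined)" using de by simp
qed simp

lemma uenv_pers: "pers K (uenv V)"
  unfolding pers_def
proof (intro conjI allI impI)
  fix s show "module K (sp (uenv V) s)" by (rule uenv_module)
next
  fix s t :: "real^'n" assume st: "s \<le> t"
  show "lin K (sp (uenv V) s) (sp (uenv V) t) (mp (uenv V) s t)"
    unfolding lin_def
  proof (intro conjI ballI Pi_I)
    fix f assume "f \<in> carrier (sp (uenv V) s)"
    then show "mp (uenv V) s t f \<in> carrier (sp (uenv V) t)" using ump_closed[OF st] by simp
  next
    fix f g assume "f \<in> carrier (sp (uenv V) s)" "g \<in> carrier (sp (uenv V) s)"
    then have f: "f \<in> ucar V s" and g: "g \<in> ucar V s" by simp_all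
    show "mp (uenv V) s t (f \<oplus>\<^bsub>sp (uenv V) s\<^esub> g) = mp (uenv V) s t f \<oplus>\<^bsub>sp (uenv V) t\<^esub> mp (uenv V) s t g"
      using ucarD(1)[OF f] ucarD(1)[OF g] st by (auto intro!: ext simp: M_add)
  next
    fix k f assume k: "k \<in> carrier K" and "f \<in> carrier (sp (uenv V) s)"
    then have f: "f \<in> ucar V s" by simp_all
    show "mp (uenv V) s t (k \<odot>\<^bsub>sp (uenv V) s\<^esub> f) = k \<odot>\<^bsub>sp (uenv V) t\<^esub> mp (uenv V) s t f"
      using ucarD(1)[OF f] st k by (auto intro!: ext simp: M_smult)
  qed
next
  fix s f assume "f \<in> carrier (sp (uenv V) s)"
  then have f: "f \<in> ucar V s" by simp
  show "mp (uenv V) s s f = f" using ucarD[OF f] by (auto intro!: ext)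
next
  fix s t u f assume st: "s \<le> t" and tu: "t \<le> u" and "f \<in> carrier (sp (uenv V) s)"
  then have f: "f \<in> ucar V s" by simp
  have su: "s \<le> u" using st tu by (rule order_trans)
  show "mp (uenv V) s u f = mp (uenv V) t u (mp (uenv V) s t f)"
    using ucarD(1)[OF f] st tu su by (auto intro!: ext)
qed

lemma G_diag:
  assumes G: "G \<in> ucar (uenv V) s"
    and pos: "0 < e" "0 < d" "0 < e'" "0 < d'" and sum: "e + d = e' + d'" and le: "e \<le> e'"
  shows "G e d = G e' d'"
proof -
  interpret U: pm K "uenv V" by (rule pm.intro[OF fieldK uenv_pers])
  have Ge: "G e \<in> ucar V (up s e)" using U.ucarD(1)[OF G pos(1)] by simp
  have Gc: "mp (uenv V) (up s e) (up s e') (G e) = G e'" using U.ucarD(2)[OF G pos(1) le] by simp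
  have "G e' d' = mp V (up s (e + d')) (up s (e' + d')) (G e d')"
    using fun_cong[OF Gc, of d'] pos by simp
  also have "\<dots> = mp V (up (up s e) d') (up (up s e) d) (G e d')"
    using sum by simp
  also have "\<dots> = G e d" using ucarD(2)[OF Ge, of d' d] pos sum le by simp
  finally show ?thesis by simp
qed

lemma uenv_usc: "usc K (uenv V)"
  unfolding usc_def
proof (intro conjI allI)
  show "pers K (uenv V)" by (rule uenv_pers)
next
  fix s
  interpret U: pm K "uenv V" by (rule pm.intro[OF fieldK uenv_pers])
  let ?F = "uunit (uenv V) s"
  have Fv: "?F f e d = (if 0 < e \<and> 0 < d then mp V (up s d) (up s (e + d)) (f d) else undefined)" if "0 < e" for f e d
    unfolding uunit_def using that by (simp add: add.commute)
  have Fv0: "?F f e = undefined" if "\<not> 0 < e" for f e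
    unfolding uunit_def using that by simp
  show "bij_betw ?F (carrier (sp (uenv V) s)) (ucar (uenv V) s)"
    unfolding bij_betw_def
  proof
    show "inj_on ?F (carrier (sp (uenv V) s))"
    proof (rule inj_onI)
      fix f g assume "f \<in> carrier (sp (uenv V) s)" "g \<in> carrier (sp (uenv V) s)" and eq: "?F f = ?F g"
      then have f: "f \<in> ucar V s" and g: "g \<in> ucar V s" by simp_all
      show "f = g"
      proof (rule ucar_ext[OF f g])
        fix x :: real assume x: "0 < x"
        have "?F f (x/2) (x/2) = ?F g (x/2) (x/2)" using eq by simp
        then have "mp V (up s (x/2)) (up s (x/2 + x/2)) (f (x/2)) = mp V (up s (x/2)) (up s (x/2 + x/2)) (g (x/2))"
          using x by (simp only: Fv[of "x/2"]) simp
        then show "f x = g x" using ucarD(2)[OF f, of "x/2" x] ucarD(2)[OF g, of "x/2" x] x by simp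
      qed
    qed
  next
    show "?F ` carrier (sp (uenv V) s) = ucar (uenv V) s"
    proof (intro equalityI subsetI)
      fix G assume "G \<in> ?F ` carrier (sp (uenv V) s)"
      then obtain f where f: "f \<in> carrier (sp (uenv V) s)" "G = ?F f" by blast
      show "G \<in> ucar (uenv V) s"
        unfolding f(2) uunit_def
      proof (rule U.ucarI)
        fix e :: real assume "0 < e"
        then show "(if 0 < e then mp (uenv V) s (up s e) f else undefined) \<in> carrier (sp (uenv V) (up s e))"
          using U.M_closed[OF _ f(1), of "up s e"] by simp
      next
        fix d e :: real assume de: "0 < d" "d \<le> e"
        show "mp (uenv V) (up s d) (up s e) (if 0 < d then mp (uenv V) s (up s d) f else undefined) =
          (if 0 < e then mp (uenv V) s (up s e) f else undefined)"
          using de U.M_comp[OF _ _ f(1), of "up s d" "up s e"] by (simp del: uenv_sp)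
      qed simp
    next
      fix G assume G: "G \<in> ucar (uenv V) s"
      have Gin: "G e \<in> ucar V (up s e)" if "0 < e" for e using U.ucarD(1)[OF G that] by simp
      have Gund: "G e = undefined" if "\<not> 0 < e" for e using U.ucarD(3)[OF G that] by simp
      define f where "f x = (if 0 < x then G (x/2) (x/2) else undefined)" for x
      have fG: "f (e + d) = G e d" if "0 < e" "0 < d" for e d
      proof (cases "e \<le> (e + d) / 2")
        case True
        then show ?thesis unfolding f_def using that G_diag[OF G, of e d "(e+d)/2" "(e+d)/2"] by simp
      next
        case False
        then show ?thesis unfolding f_def using that G_diag[OF G, of "(e+d)/2" "(e+d)/2" e d] by simp
      qed
      have f: "f \<in> ucar V s"
      proof (rule ucarI)
        fix x :: real assume x: "0 < x"
        have "f x = f (x/2 + x/2)" by simp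
        also have "\<dots> = G (x/2) (x/2)" using x by (intro fG) simp_all
        finally have "f x = G (x/2) (x/2)" .
        moreover have "G (x/2) (x/2) \<in> carrier (sp V (up (up s (x/2)) (x/2)))"
          using ucarD(1)[OF Gin[of "x/2"], of "x/2"] x by simp
        ultimately show "f x \<in> carrier (sp V (up s x))" by simp
      next
        fix d e :: real assume de: "0 < d" "d \<le> e"
        have 1: "f d = G (d/2) (d/2)" using fG[of "d/2" "d/2"] de by simp
        have 2: "f e = G (d/2) (e - d/2)" using fG[of "d/2" "e - d/2"] de by simp
        show "mp V (up s d) (up s e) (f d) = f e"
          unfolding 1 2 using ucarD(2)[OF Gin[of "d/2"], of "d/2" "e - d/2"] de by simp
      next
        fix e :: real assume "\<not> 0 < e" then show "f e = undefined" by (simp add: f_def)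
      qed
      have "?F f = G"
      proof (rule ext)
        fix e
        show "?F f e = G e"
        proof (cases "0 < e")
          case e: True
          show ?thesis
          proof (rule ext)
            fix d
            show "?F f e d = G e d"
            proof (cases "0 < d")
              case True
              then have "?F f e d = f (d + e)" unfolding Fv[OF e] using e ucarD(2)[OF f, of d "e + d"] by (simp add: add.commute)
              also have "\<dots> = G e d" using fG[of e d] True e by (simp add: add.commute)
              finally show ?thesis .
            next
              case False
              then show ?thesis unfolding Fv[OF e] using ucarD(3)[OF Gin[OF e], of d] by auto
            qed
          qed
        next
          case False
          then show ?thesis using Fv0[of e] Gund[of e] by simp
        qed
      qed
      then show "G \<in> ?F ` carrier (sp (uenv V) s)" using f by force
    qed
  qed
qed

end


context pm begin

definition upsi :: "real^'n \<Rightarrow> real \<Rightarrow> 'c \<Rightarrow> real \<Rightarrow> 'c" where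
  "upsi s e x = (\<lambda>d. if 0 < d then mp V s (up s (e + d)) x else undefined)"

lemma upsi_in: "0 < e \<Longrightarrow> x \<in> carrier (sp V s) \<Longrightarrow> upsi s e x \<in> ucar V (up s e)"
  unfolding upsi_def by (rule ucarI) simp_all

lemma ucounit_obs: "obs_hom K (uenv V) V ucounit"
  unfolding obs_hom_def
proof (intro conjI allI impI)
  fix s and e :: real assume e: "0 < e"
  show "lin K (sp (uenv V) s) (sp V (up s e)) (ucounit s e)"
    unfolding lin_def ucounit_def
    using e by (auto simp: ucarD)
next
  fix s and e e' e'' :: real and f
  assume h: "0 < e" "0 \<le> e''" "e'' < e'" "e' \<le> e" "f \<in> carrier (sp (uenv V) s)"
  then have f: "f \<in> ucar V s" by simp
  have "mp V (up s e') (up s e) (mp V (up s (e' - e'')) (up s e') (f (e' - e''))) = f e"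
    using h ucarD[OF f, of "e' - e''"] ucarD(2)[OF f, of "e' - e''" e] ucarD(2)[OF f, of "e'" e] by simp
  then show "ucounit s e f = mp V (up s e') (up s e) (ucounit (up s e'') (e' - e'') (mp (uenv V) s (up s e'') f))"
    using h by (simp add: ucounit_def)
qed

lemma upsi_obs: "obs_hom K V (uenv V) upsi"
  unfolding obs_hom_def
proof (intro conjI allI impI)
  fix s and e :: real assume e: "0 < e"
  show "lin K (sp V s) (sp (uenv V) (up s e)) (upsi s e)"
    unfolding lin_def
  proof (intro conjI ballI Pi_I)
    fix x assume "x \<in> carrier (sp V s)" then show "upsi s e x \<in> carrier (sp (uenv V) (up s e))"
      using upsi_in e by simp
  next
    fix x y assume "x \<in> carrier (sp V s)" "y \<in> carrier (sp V s)"
    then show "upsi s e (x \<oplus>\<^bsub>sp V s\<^esub> y) = upsi s e x \<oplus>\<^bsub>sp (uenv V) (up s e)\<^esub> upsi s e y"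
      using e by (auto intro!: ext simp: upsi_def M_add)
  next
    fix k x assume "k \<in> carrier K" "x \<in> carrier (sp V s)"
    then show "upsi s e (k \<odot>\<^bsub>sp V s\<^esub> x) = k \<odot>\<^bsub>sp (uenv V) (up s e)\<^esub> upsi s e x"
      using e by (auto intro!: ext simp: upsi_def M_smult)
  qed
next
  fix s and e e' e'' :: real and x
  assume h: "0 < e" "0 \<le> e''" "e'' < e'" "e' \<le> e" "x \<in> carrier (sp V s)"
  show "upsi s e x = mp (uenv V) (up s e') (up s e) (upsi (up s e'') (e' - e'') (mp V s (up s e'') x))"
    using h by (auto intro!: ext simp: upsi_def)
qed

lemma ucounit_iso: "obs_iso K (uenv V) V ucounit"
  unfolding obs_iso_def
proof (intro conjI exI[of _ upsi])
  show "obs_hom K (uenv V) V ucounit" by (rule ucounit_obs)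
  show "obs_hom K V (uenv V) upsi" by (rule upsi_obs)
  show "obs_eq (uenv V) (obs_comp upsi ucounit) (obs_id (uenv V))"
    unfolding obs_eq_def obs_comp_def obs_id_def
  proof (intro allI impI)
    fix s e f assume h: "0 < (e::real)" "f \<in> carrier (sp (uenv V) s)"
    then have f: "f \<in> ucar V s" by simp
    show "upsi (up s (e / 2)) (e / 2) (ucounit s (e / 2) f) = mp (uenv V) s (up s e) f"
    proof (rule ext)
      fix d
      show "upsi (up s (e / 2)) (e / 2) (ucounit s (e / 2) f) d = mp (uenv V) s (up s e) f d"
        using h ucarD(2)[OF f, of "e/2" "e/2 + (e/2 + d)"] ucarD(2)[OF f, of d "e + d"]
        by (simp add: upsi_def ucounit_def add.commute)
    qed
  qed
  show "obs_eq V (obs_comp ucounit upsi) (obs_id V)"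
    unfolding obs_eq_def obs_comp_def obs_id_def
    by (simp add: upsi_def ucounit_def)
qed

lemma uunit_hom: "pers_hom K V (uenv V) (uunit V)"
  unfolding pers_hom_def
proof (intro conjI allI impI)
  fix s
  show "lin K (sp V s) (sp (uenv V) s) (uunit V s)"
    unfolding lin_def
  proof (intro conjI ballI Pi_I)
    fix x assume "x \<in> carrier (sp V s)" then show "uunit V s x \<in> carrier (sp (uenv V) s)"
      unfolding uunit_def by (auto intro!: ucarI)
  next
    fix x y assume "x \<in> carrier (sp V s)" "y \<in> carrier (sp V s)"
    then show "uunit V s (x \<oplus>\<^bsub>sp V s\<^esub> y) = uunit V s x \<oplus>\<^bsub>sp (uenv V) s\<^esub> uunit V s y"
      by (auto intro!: ext simp: uunit_def M_add)
  next
    fix k x assume "k \<in> carrier K" "x \<in> carrier (sp V s)"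
    then show "uunit V s (k \<odot>\<^bsub>sp V s\<^esub> x) = k \<odot>\<^bsub>sp (uenv V) s\<^esub> uunit V s x"
      by (auto intro!: ext simp: uunit_def M_smult)
  qed
next
  fix s t x assume "s \<le> t" "x \<in> carrier (sp V s)"
  then show "uunit V t (mp V s t x) = mp (uenv V) s t (uunit V s x)"
    by (auto intro!: ext simp: uunit_def)
qed

end

lemma part3: "field K \<Longrightarrow> pers K V \<Longrightarrow> usc K (uenv V) \<and> obs_iso K (uenv V) V ucounit"
proof -
  assume f: "field K" and l: "pers K V"
  then interpret pm K V by (intro pm.intro)
  show ?thesis using uenv_usc ucounit_iso by blast
qed

lemma part4: "field K \<Longrightarrow> usc K V \<Longrightarrow> pers_iso K V (uenv V) (uunit V)"
proof -
  assume f: "field K" and l: "usc K V"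
  then interpret pm K V by (intro pm.intro) (auto simp: usc_def)
  show ?thesis
    by (rule pers_iso_of_bij[OF uunit_hom persV]) (use l in \<open>simp add: usc_def\<close>)
qed

theorem proposition2p14:
  fixes K :: "'k ring"
  assumes "field K"
  shows "(\<forall>V :: ('n::finite, 'k, 'c) pmod. pers K V \<longrightarrow>
            lsc K (lenv V) \<and> obs_iso K V (lenv V) (lunit V)) \<and>
         (\<forall>V :: ('n, 'k, 'c) pmod. lsc K V \<longrightarrow> pers_iso K (lenv V) V (lcounit V)) \<and>
         (\<forall>V :: ('n, 'k, 'c) pmod. pers K V \<longrightarrow>
            usc K (uenv V) \<and> obs_iso K (uenv V) V ucounit) \<and>
         (\<forall>V :: ('n, 'k, 'c) pmod. usc K V \<longrightarrow> pers_iso K V (uenv V) (uunit V))"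
  using part1[OF assms] part2[OF assms] part3[OF assms] part4[OF assms] by blast


end
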